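(* Let $\Gamma$ be a countable group and let $S\leq\Gamma$ be a nontrivial subgroup. Fix a family $(\varepsilon_\gamma)_{\gamma\in\Gamma\setminus\{e_\Gamma\}}$ of real numbers in $]0,1[$ such that $\prod_{\gamma\in\Gamma\setminus\{e_\Gamma\}}(1-\varepsilon_\gamma)>0$, and a family $(n_\gamma)_{\gamma\in\Gamma\setminus\{e_\Gamma\}}$ of pairwise coprime integers. Assume that for every $\gamma\in\Gamma\setminus\{e_\Gamma\}$ there exists a finite index subgroup $\Gamma_\gamma\leq\Gamma$, whose index is a power of $n_\gamma$, such that (1) $\gamma\notin\Gamma_\gamma$, and (2) $\lvert\{q\in\Gamma/\Gamma_\gamma\colon sq=q \text{ for all } s\in S\}\rvert\geq(1-\varepsilon_\gamma)[\Gamma:\Gamma_\gamma]$. For each finite $F\subseteq\Gamma\setminus\{e_\Gamma\}$ let $X_F=\Gamma/\bigcap_{\gamma\in F}\Gamma_\gamma$ with the left-translation action of $\Gamma$ and the uniform probability measure $\mu_F$. Then the profinite action $\Gamma\curvearrowright\varprojlim_F(X_F,\mu_F)$ is allosteric.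
   Context: The finite subsets $F$ of $\Gamma\setminus\{e_\Gamma\}$ are directed by inclusion; for $F\subseteq G$ the map $X_G\to X_F$ is the natural $\Gamma$-equivariant surjection $x\bigcap_{\gamma\in G}\Gamma_\gamma\mapsto x\bigcap_{\gamma\in F}\Gamma_\gamma$. The inverse limit $\varprojlim_F X_F=\{(x_F)\in\prod_F X_F\colon x_F \text{ is the image of } x_G \text{ whenever } F\subseteq G\}$ is a compact metrizable totally disconnected space with the product topology and diagonal $\Gamma$-action, and it carries the unique Borel probability measure $\mu$ whose pushforward to each $X_F$ is $\mu_F$. A minimal ergodic action $\Gamma\curvearrowright(X,\mu)$ (action by homeomorphisms on a compact metric space with all orbits dense, $\mu$ an ergodic invariant Borel probability measure) is allosteric if the set of points with trivial stabilizer is comeager (topologically free) but does not have full $\mu$-measure (not essentially free); in particular the conclusion includes that the action is minimal and ergodic. *)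

theory Defs
  imports "HOL-Probability.Probability" "HOL-Algebra.Left_Coset"
begin

definition borel_of :: "'b topology \<Rightarrow> 'b measure" where
  "borel_of T = sigma (topspace T) {U. openin T U}"

definition comeager_in :: "'b topology \<Rightarrow> 'b set \<Rightarrow> bool" where
  "comeager_in T A \<longleftrightarrow>
     (\<exists>U :: nat \<Rightarrow> 'b set. (\<forall>n. openin T (U n) \<and> T closure_of (U n) = topspace T)
        \<and> (\<Inter>n. U n) \<subseteq> A)"

definition top_action :: "('a, 'c) monoid_scheme \<Rightarrow> 'b topology \<Rightarrow> ('a \<Rightarrow> 'b \<Rightarrow> 'b) \<Rightarrow> bool" where
  "top_action G T act \<longleftrightarrow>
     (\<forall>x\<in>topspace T. act \<one>\<^bsub>G\<^esub> x = x) \<and>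
     (\<forall>g\<in>carrier G. \<forall>h\<in>carrier G. \<forall>x\<in>topspace T.
        act (g \<otimes>\<^bsub>G\<^esub> h) x = act g (act h x)) \<and>
     (\<forall>g\<in>carrier G. homeomorphic_map T T (act g))"

definition minimal_action :: "('a, 'c) monoid_scheme \<Rightarrow> 'b topology \<Rightarrow> ('a \<Rightarrow> 'b \<Rightarrow> 'b) \<Rightarrow> bool" where
  "minimal_action G T act \<longleftrightarrow>
     (\<forall>x\<in>topspace T. T closure_of ((\<lambda>g. act g x) ` carrier G) = topspace T)"

definition ergodic_invariant_measure ::
  "('a, 'c) monoid_scheme \<Rightarrow> 'b topology \<Rightarrow> ('a \<Rightarrow> 'b \<Rightarrow> 'b) \<Rightarrow> 'b measure \<Rightarrow> bool" where
  "ergodic_invariant_measure G T act \<mu> \<longleftrightarrow>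
     prob_space \<mu> \<and> space \<mu> = topspace T \<and> sets \<mu> = sets (borel_of T) \<and>
     (\<forall>g\<in>carrier G. act g \<in> \<mu> \<rightarrow>\<^sub>M \<mu> \<and> distr \<mu> \<mu> (act g) = \<mu>) \<and>
     (\<forall>A\<in>sets \<mu>. (\<forall>g\<in>carrier G. act g ` A = A) \<longrightarrow>
        measure \<mu> A = 0 \<or> measure \<mu> A = 1)"

definition free_points :: "('a, 'c) monoid_scheme \<Rightarrow> 'b topology \<Rightarrow> ('a \<Rightarrow> 'b \<Rightarrow> 'b) \<Rightarrow> 'b set" where
  "free_points G T act = {x\<in>topspace T. \<forall>g\<in>carrier G. act g x = x \<longrightarrow> g = \<one>\<^bsub>G\<^esub>}"

text \<open>Allosteric minimal ergodic action on a compact metrizable space: topologically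
  free (free points comeager) but not essentially free (free points not of full measure).\<close>
definition allosteric ::
  "('a, 'c) monoid_scheme \<Rightarrow> 'b topology \<Rightarrow> ('a \<Rightarrow> 'b \<Rightarrow> 'b) \<Rightarrow> 'b measure \<Rightarrow> bool" where
  "allosteric G T act \<mu> \<longleftrightarrow>
     compact_space T \<and> metrizable_space T \<and>
     top_action G T act \<and> minimal_action G T act \<and> ergodic_invariant_measure G T act \<mu> \<and>
     comeager_in T (free_points G T act) \<and>
     \<not> (AE x in \<mu>. x \<in> free_points G T act)"

definition fin_index :: "('a, 'c) monoid_scheme \<Rightarrow> 'a set set" where
  "fin_index G = {F. finite F \<and> F \<subseteq> carrier G - {\<one>\<^bsub>G\<^esub>}}"

definition sub_int :: "('a, 'c) monoid_scheme \<Rightarrow> ('a \<Rightarrow> 'a set) \<Rightarrow> 'a set \<Rightarrow> 'a set" where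
  "sub_int G H F = carrier G \<inter> (\<Inter>\<gamma>\<in>F. H \<gamma>)"

definition XF :: "('a, 'c) monoid_scheme \<Rightarrow> ('a \<Rightarrow> 'a set) \<Rightarrow> 'a set \<Rightarrow> 'a set set" where
  "XF G H F = lcosets\<^bsub>G\<^esub> (sub_int G H F)"

definition inv_lim :: "('a, 'c) monoid_scheme \<Rightarrow> ('a \<Rightarrow> 'a set) \<Rightarrow> ('a set \<Rightarrow> 'a set) set" where
  "inv_lim G H = {x \<in> (\<Pi>\<^sub>E F\<in>fin_index G. XF G H F).
      \<forall>F\<in>fin_index G. \<forall>F'\<in>fin_index G. F \<subseteq> F' \<longrightarrow>
        (\<forall>g\<in>x F'. x F = g <#\<^bsub>G\<^esub> sub_int G H F)}"

definition inv_lim_top :: "('a, 'c) monoid_scheme \<Rightarrow> ('a \<Rightarrow> 'a set) \<Rightarrow> ('a set \<Rightarrow> 'a set) topology" where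
  "inv_lim_top G H = subtopology
      (product_topology (\<lambda>F. discrete_topology (XF G H F)) (fin_index G)) (inv_lim G H)"

definition inv_lim_act :: "('a, 'c) monoid_scheme \<Rightarrow> 'a \<Rightarrow> ('a set \<Rightarrow> 'a set) \<Rightarrow> ('a set \<Rightarrow> 'a set)" where
  "inv_lim_act G g x = restrict (\<lambda>F. g <#\<^bsub>G\<^esub> x F) (fin_index G)"

definition has_uniform_marginals ::
  "('a, 'c) monoid_scheme \<Rightarrow> ('a \<Rightarrow> 'a set) \<Rightarrow> ('a set \<Rightarrow> 'a set) measure \<Rightarrow> bool" where
  "has_uniform_marginals G H \<mu> \<longleftrightarrow>
     prob_space \<mu> \<and> space \<mu> = inv_lim G H \<and> sets \<mu> = sets (borel_of (inv_lim_top G H)) \<and>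
     (\<forall>F\<in>fin_index G. (\<lambda>x. x F) \<in> \<mu> \<rightarrow>\<^sub>M count_space (XF G H F) \<and>
        distr \<mu> (count_space (XF G H F)) (\<lambda>x. x F) = uniform_count_measure (XF G H F))"

end

theory Submission
  imports Defs
begin

context group
begin

lemma lc_eq:
  assumes "subgroup K G" "a \<in> carrier G" "b \<in> carrier G"
  shows "(a <# K = b <# K) \<longleftrightarrow> inv a \<otimes> b \<in> K"
proof
  assume e: "a <# K = b <# K"
  have "b \<in> b <# K" using assms lcos_self by blast
  then have "b \<in> a <# K" using e by simp
  then show "inv a \<otimes> b \<in> K" using subgroup.lcos_module_imp[OF assms(1) is_group assms(2)] by blast
next
  assume h: "inv a \<otimes> b \<in> K"
  have "b \<in> a <# K" using subgroup.lcos_module_rev[OF assms(1) is_group assms(2,3) h] .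
  then show "a <# K = b <# K"
    using assms by (metis l_repr_independence)
qed

lemma lc_mem_eq:
  assumes "subgroup K G" "a \<in> carrier G" "b \<in> a <# K"
  shows "b <# K = a <# K"
  using assms by (metis l_repr_independence)

lemma lc_carrier:
  assumes "subgroup K G" "a \<in> carrier G" "b \<in> a <# K"
  shows "b \<in> carrier G"
  using assms l_coset_carrier by blast

lemma lcosets_iff: "q \<in> lcosets K \<longleftrightarrow> (\<exists>a\<in>carrier G. q = a <# K)"
  unfolding LCOSETS_def by auto

lemma lc_assoc:
  assumes "subgroup K G" "g \<in> carrier G" "a \<in> carrier G"
  shows "g <# (a <# K) = (g \<otimes> a) <# K"
  using assms lcos_m_assoc subgroup.subset by blast

lemma lc_fix_iff:
  assumes "subgroup K G" "s \<in> carrier G" "a \<in> carrier G"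
  shows "(s <# (a <# K) = a <# K) \<longleftrightarrow> inv a \<otimes> s \<otimes> a \<in> K"
proof -
  have "s <# (a <# K) = (s \<otimes> a) <# K" using lc_assoc assms by blast
  then have "(s <# (a <# K) = a <# K) \<longleftrightarrow> inv a \<otimes> (s \<otimes> a) \<in> K"
    using lc_eq[OF assms(1) assms(3)] assms by auto
  then show ?thesis using assms by (simp add: m_assoc)
qed

lemma lc_self: "subgroup K G \<Longrightarrow> a \<in> carrier G \<Longrightarrow> a \<in> a <# K"
  using lcos_self by blast

lemma lc_one: "subgroup K G \<Longrightarrow> \<one> <# K = K"
  using lcos_mult_one subgroup.subset by blast

lemma lc_sub_carrier: "subgroup K G \<Longrightarrow> a \<in> carrier G \<Longrightarrow> a <# K \<subseteq> carrier G"
  using l_coset_subset_G subgroup.subset by blast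

lemma lc_inj:
  assumes "g \<in> carrier G" "A \<subseteq> carrier G" "B \<subseteq> carrier G" "g <# A = g <# B"
  shows "A = B"
proof -
  have "inv g <# (g <# A) = inv g <# (g <# B)" using assms(4) by (rule arg_cong)
  moreover have "inv g <# (g <# A) = A" using assms(1,2) by (simp add: lcos_m_assoc lcos_mult_one)
  moreover have "inv g <# (g <# B) = B" using assms(1,3) by (simp add: lcos_m_assoc lcos_mult_one)
  ultimately show ?thesis by simp
qed

end

definition pj :: "('a, 'c) monoid_scheme \<Rightarrow> 'a set \<Rightarrow> 'a set \<Rightarrow> 'a set" where
  "pj G K q = (\<Union>g\<in>q. g <#\<^bsub>G\<^esub> K)"

context group
begin

lemma pj_lc:
  assumes "subgroup K' G" "subgroup K G" "K' \<subseteq> K" "a \<in> carrier G"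
  shows "pj G K (a <# K') = a <# K"
proof -
  have "\<And>g. g \<in> a <# K' \<Longrightarrow> g <# K = a <# K"
  proof -
    fix g assume "g \<in> a <# K'"
    then have "g \<in> a <# K" using assms(3) unfolding l_coset_def by blast
    then show "g <# K = a <# K" using lc_mem_eq assms by blast
  qed
  moreover have "a \<in> a <# K'" using lc_self assms by blast
  ultimately show ?thesis unfolding pj_def by blast
qed

lemma index_fib:
  assumes K': "subgroup K' G" and K: "subgroup K G" and sub: "K' \<subseteq> K"
    and fin: "finite (lcosets K')"
  shows "finite (lcosets K) \<and>
    (\<forall>Q\<in>lcosets K. card {q \<in> lcosets K'. pj G K q = Q} = card {q \<in> lcosets K'. pj G K q = K}) \<and>
    card (lcosets K') = card (lcosets K) * card {q \<in> lcosets K'. pj G K q = K}"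
proof -
  have img: "lcosets K = pj G K ` (lcosets K')"
  proof
    show "lcosets K \<subseteq> pj G K ` (lcosets K')"
    proof
      fix q assume "q \<in> lcosets K"
      then obtain a where a: "a \<in> carrier G" "q = a <# K" using lcosets_iff[of q K] by blast
      then have "q = pj G K (a <# K')" using pj_lc assms by simp
      moreover have "a <# K' \<in> lcosets K'" using a lcosets_iff[of "a <# K'" K'] by blast
      ultimately show "q \<in> pj G K ` (lcosets K')" by blast
    qed
  next
    show "pj G K ` (lcosets K') \<subseteq> lcosets K"
    proof
      fix r assume "r \<in> pj G K ` (lcosets K')"
      then obtain q where "q \<in> lcosets K'" "r = pj G K q" by blast
      then obtain a where "a \<in> carrier G" "r = pj G K (a <# K')" using lcosets_iff[of q K'] by blast
      then have "r = a <# K" using pj_lc[OF assms(1-3)] by simp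
      then show "r \<in> lcosets K" using lcosets_iff[of r K] \<open>a \<in> carrier G\<close> by blast
    qed
  qed
  have finK: "finite (lcosets K)" using img fin by simp
  define fib where "fib Q = {q \<in> lcosets K'. pj G K q = Q}" for Q
  have U: "lcosets K' = (\<Union>Q\<in>lcosets K. fib Q)"
    using img unfolding fib_def by blast
  have card1: "card (lcosets K') = (\<Sum>Q\<in>lcosets K. card (fib Q))"
    unfolding U
  proof (rule card_UN_disjoint)
    show "finite (lcosets K)" by (rule finK)
    show "\<forall>i\<in>lcosets K. finite (fib i)" unfolding fib_def by (metis (no_types, lifting) fin finite_subset mem_Collect_eq subsetI)
    show "\<forall>i\<in>lcosets K. \<forall>j\<in>lcosets K. i \<noteq> j \<longrightarrow> fib i \<inter> fib j = {}"
      unfolding fib_def by blast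
  qed
  have fibK: "\<And>b. b \<in> carrier G \<Longrightarrow> card (fib (b <# K)) = card (fib K)"
  proof -
    fix b assume b: "b \<in> carrier G"
    have eq: "fib (b <# K) = (\<lambda>q. b <# q) ` fib K"
    proof
      show "(\<lambda>q. b <# q) ` fib K \<subseteq> fib (b <# K)"
      proof
        fix r assume "r \<in> (\<lambda>q. b <# q) ` fib K"
        then obtain q where q: "q \<in> fib K" "r = b <# q" by blast
        then obtain a where a: "a \<in> carrier G" "q = a <# K'" unfolding fib_def using lcosets_iff[of q K'] by blast
        have "pj G K q = K" using q unfolding fib_def by simp
        then have aK: "a <# K = K" using pj_lc[OF K' K sub a(1)] a(2) by simp
        have ba: "b \<otimes> a \<in> carrier G" using a b by simp
        have r1: "r = (b \<otimes> a) <# K'" using q(2) a(2) lc_assoc[OF K' b a(1)] by simp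
        have "pj G K ((b \<otimes> a) <# K') = (b \<otimes> a) <# K" using pj_lc[OF K' K sub ba] .
        also have "\<dots> = b <# (a <# K)" using lc_assoc[OF K b a(1)] by simp
        also have "\<dots> = b <# K" using aK by simp
        finally have p2: "pj G K ((b \<otimes> a) <# K') = b <# K" .
        have "(b \<otimes> a) <# K' \<in> lcosets K'" using ba lcosets_iff[of "(b \<otimes> a) <# K'" K'] by blast
        then show "r \<in> fib (b <# K)" unfolding fib_def using r1 p2 by blast
      qed
    next
      show "fib (b <# K) \<subseteq> (\<lambda>q. b <# q) ` fib K"
      proof
        fix r assume r: "r \<in> fib (b <# K)"
        then obtain c where c: "c \<in> carrier G" "r = c <# K'" unfolding fib_def using lcosets_iff[of r K'] by blast
        have "pj G K r = b <# K" using r unfolding fib_def by simp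
        then have cK: "c <# K = b <# K" using pj_lc[OF K' K sub c(1)] c(2) by simp
        define d where "d = inv b \<otimes> c"
        have d: "d \<in> carrier G" using d_def b c by simp
        have bd: "b \<otimes> d = c" unfolding d_def using b c(1) by (simp add: m_assoc[symmetric])
        have r2: "r = b <# (d <# K')" using lc_assoc[OF K' b d] bd c(2) by simp
        have "d <# K = inv b <# (c <# K)" unfolding d_def using lc_assoc[OF K _ c(1), of "inv b"] b by simp
        also have "\<dots> = inv b <# (b <# K)" using cK by simp
        also have "\<dots> = \<one> <# K" using lc_assoc[OF K _ b, of "inv b"] b by simp
        also have "\<dots> = K" using lc_one[OF K] .
        finally have dK: "d <# K = K" .
        have "pj G K (d <# K') = K" using pj_lc[OF K' K sub d] dK by simp
        moreover have "d <# K' \<in> lcosets K'" using d lcosets_iff[of "d <# K'" K'] by blast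
        ultimately have "d <# K' \<in> fib K" unfolding fib_def by blast
        then show "r \<in> (\<lambda>q. b <# q) ` fib K" using r2 by blast
      qed
    qed
    have sc: "\<And>q. q \<in> fib K \<Longrightarrow> q \<subseteq> carrier G"
    proof -
      fix q assume "q \<in> fib K"
      then have "q \<in> lcosets K'" unfolding fib_def by blast
      then obtain a where "a \<in> carrier G" "q = a <# K'" using lcosets_iff[of q K'] by blast
      then show "q \<subseteq> carrier G" using lc_sub_carrier[OF K'] by blast
    qed
    have "inj_on (\<lambda>q. b <# q) (fib K)"
    proof (rule inj_onI)
      fix q1 q2 assume "q1 \<in> fib K" "q2 \<in> fib K" "b <# q1 = b <# q2"
      then show "q1 = q2" using lc_inj[OF b] sc by blast
    qed
    then show "card (fib (b <# K)) = card (fib K)" using eq card_image by metis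
  qed
  have "card (lcosets K') = (\<Sum>Q\<in>lcosets K. card (fib K))"
        unfolding card1
  proof (rule sum.cong)
    fix Q assume "Q \<in> lcosets K"
    then obtain b where "b \<in> carrier G" "Q = b <# K" using lcosets_iff[of Q K] by blast
    then show "card (fib Q) = card (fib K)" using fibK by simp
  qed simp
  then have "card (lcosets K') = card (lcosets K) * card (fib K)" by simp
  moreover have "\<forall>Q\<in>lcosets K. card (fib Q) = card (fib K)"
  proof
    fix Q assume "Q \<in> lcosets K"
    then obtain b where "b \<in> carrier G" "Q = b <# K" using lcosets_iff[of Q K] by blast
    then show "card (fib Q) = card (fib K)" using fibK by simp
  qed
  ultimately show ?thesis using finK unfolding fib_def by simp
qed

lemma index_dvd:
  assumes K': "subgroup K' G" and K: "subgroup K G" and sub: "K' \<subseteq> K"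
    and fin: "finite (lcosets K')"
  shows "finite (lcosets K) \<and> card (lcosets K) dvd card (lcosets K')"
  using index_fib[OF assms] by simp

end

definition fixc :: "('a, 'c) monoid_scheme \<Rightarrow> 'a set \<Rightarrow> 'a set \<Rightarrow> 'a set set" where
  "fixc G S K = {q \<in> lcosets\<^bsub>G\<^esub> K. \<forall>s\<in>S. s <#\<^bsub>G\<^esub> q = q}"

context group
begin

lemma subgroup_Int2: "subgroup A G \<Longrightarrow> subgroup B G \<Longrightarrow> subgroup (A \<inter> B) G"
  by (rule subgroups_Inter_pair)

lemma fix_lc_iff:
  assumes K: "subgroup K G" and S: "S \<subseteq> carrier G" and a: "a \<in> carrier G"
  shows "a <# K \<in> fixc G S K \<longleftrightarrow> (\<forall>s\<in>S. inv a \<otimes> s \<otimes> a \<in> K)"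
proof -
  have "a <# K \<in> lcosets K" using a lcosets_iff[of "a <# K" K] by blast
  then show ?thesis unfolding fixc_def using lc_fix_iff[OF K _ a] S by blast
qed

lemma crt:
  assumes A: "subgroup A G" and B: "subgroup B G" and S: "S \<subseteq> carrier G"
    and fA: "finite (lcosets A)" and fB: "finite (lcosets B)"
    and cop: "coprime (card (lcosets A)) (card (lcosets B))"
  shows "finite (lcosets (A \<inter> B)) \<and>
         card (lcosets (A \<inter> B)) = card (lcosets A) * card (lcosets B) \<and>
         card (fixc G S (A \<inter> B)) = card (fixc G S A) * card (fixc G S B)"
proof -
  have AB: "subgroup (A \<inter> B) G" using A B by (rule subgroup_Int2)
  define \<Phi> where "\<Phi> q = (pj G A q, pj G B q)" for q
  have \<Phi>a: "\<And>a. a \<in> carrier G \<Longrightarrow> \<Phi> (a <# (A \<inter> B)) = (a <# A, a <# B)"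
    unfolding \<Phi>_def using pj_lc[OF AB A] pj_lc[OF AB B] by auto
  have inj: "inj_on \<Phi> (lcosets (A \<inter> B))"
  proof (rule inj_onI)
    fix p q assume p: "p \<in> lcosets (A \<inter> B)" and q: "q \<in> lcosets (A \<inter> B)" and e: "\<Phi> p = \<Phi> q"
    obtain a where a: "a \<in> carrier G" "p = a <# (A \<inter> B)" using p lcosets_iff[of p "A \<inter> B"] by blast
    obtain b where b: "b \<in> carrier G" "q = b <# (A \<inter> B)" using q lcosets_iff[of q "A \<inter> B"] by blast
    have "a <# A = b <# A" "a <# B = b <# B" using e \<Phi>a[OF a(1)] \<Phi>a[OF b(1)] a(2) b(2) by auto
    then have "inv a \<otimes> b \<in> A" "inv a \<otimes> b \<in> B" using lc_eq[OF A a(1) b(1)] lc_eq[OF B a(1) b(1)] by auto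
    then have "inv a \<otimes> b \<in> A \<inter> B" by blast
    then show "p = q" using lc_eq[OF AB a(1) b(1)] a(2) b(2) by simp
  qed
  have img: "\<Phi> ` (lcosets (A \<inter> B)) \<subseteq> (lcosets A) \<times> (lcosets B)"
  proof
    fix r assume "r \<in> \<Phi> ` (lcosets (A \<inter> B))"
    then obtain p where p: "p \<in> lcosets (A \<inter> B)" "r = \<Phi> p" by blast
    obtain a where a: "a \<in> carrier G" "p = a <# (A \<inter> B)" using p lcosets_iff[of p "A \<inter> B"] by blast
    have "a <# A \<in> lcosets A" "a <# B \<in> lcosets B"
      using a(1) lcosets_iff[of "a <# A" A] lcosets_iff[of "a <# B" B] by blast+
    then show "r \<in> (lcosets A) \<times> (lcosets B)" using p(2) a(2) \<Phi>a[OF a(1)] by simp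
  qed
  have fP: "finite ((lcosets A) \<times> (lcosets B))" using fA fB by simp
  have fAB: "finite (lcosets (A \<inter> B))"
    using finite_imageD[OF finite_subset[OF img fP] inj] .
  have le: "card (lcosets (A \<inter> B)) \<le> card (lcosets A) * card (lcosets B)"
    using card_inj_on_le[OF inj img fP] by (simp add: card_cartesian_product)
  have d1: "card (lcosets A) dvd card (lcosets (A \<inter> B))"
    using index_dvd[OF AB A _ fAB] by blast
  have d2: "card (lcosets B) dvd card (lcosets (A \<inter> B))"
    using index_dvd[OF AB B _ fAB] by blast
  have d: "card (lcosets A) * card (lcosets B) dvd card (lcosets (A \<inter> B))"
    using divides_mult[OF d1 d2 cop] .
  have "\<one> <# (A \<inter> B) \<in> lcosets (A \<inter> B)" using lcosets_iff[of "\<one> <# (A \<inter> B)" "A \<inter> B"] by blast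
  then have pos: "card (lcosets (A \<inter> B)) > 0" using fAB card_gt_0_iff by blast
  have ceq: "card (lcosets (A \<inter> B)) = card (lcosets A) * card (lcosets B)"
    using le d pos by (simp add: dvd_imp_le le_antisym)
  have imgeq: "\<Phi> ` (lcosets (A \<inter> B)) = (lcosets A) \<times> (lcosets B)"
    by (rule card_subset_eq[OF fP img]) (simp add: card_image[OF inj] ceq card_cartesian_product)
  have fimg: "\<Phi> ` fixc G S (A \<inter> B) = fixc G S A \<times> fixc G S B"
  proof
    show "\<Phi> ` fixc G S (A \<inter> B) \<subseteq> fixc G S A \<times> fixc G S B"
    proof
      fix r assume "r \<in> \<Phi> ` fixc G S (A \<inter> B)"
      then obtain p where p: "p \<in> fixc G S (A \<inter> B)" "r = \<Phi> p" by blast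
      then have "p \<in> lcosets (A \<inter> B)" unfolding fixc_def by blast
      then obtain a where a: "a \<in> carrier G" "p = a <# (A \<inter> B)" using lcosets_iff[of p "A \<inter> B"] by blast
      have "\<forall>s\<in>S. inv a \<otimes> s \<otimes> a \<in> A \<inter> B" using p(1) a fix_lc_iff[OF AB S a(1)] by simp
      then have "a <# A \<in> fixc G S A" "a <# B \<in> fixc G S B"
        using fix_lc_iff[OF A S a(1)] fix_lc_iff[OF B S a(1)] by auto
      then show "r \<in> fixc G S A \<times> fixc G S B" using p(2) a(2) \<Phi>a[OF a(1)] by simp
    qed
  next
    show "fixc G S A \<times> fixc G S B \<subseteq> \<Phi> ` fixc G S (A \<inter> B)"
    proof
      fix r assume r: "r \<in> fixc G S A \<times> fixc G S B"
      then have "r \<in> (lcosets A) \<times> (lcosets B)" unfolding fixc_def by auto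
      then have "r \<in> \<Phi> ` (lcosets (A \<inter> B))" using imgeq by simp
      then obtain p where p: "p \<in> lcosets (A \<inter> B)" "r = \<Phi> p" by blast
      then obtain a where a: "a \<in> carrier G" "p = a <# (A \<inter> B)" using lcosets_iff[of p "A \<inter> B"] by blast
      have "a <# A \<in> fixc G S A" "a <# B \<in> fixc G S B" using r p(2) a(2) \<Phi>a[OF a(1)] by auto
      then have "\<forall>s\<in>S. inv a \<otimes> s \<otimes> a \<in> A \<inter> B"
        using fix_lc_iff[OF A S a(1)] fix_lc_iff[OF B S a(1)] by auto
      then have "p \<in> fixc G S (A \<inter> B)" using a fix_lc_iff[OF AB S a(1)] by simp
      then show "r \<in> \<Phi> ` fixc G S (A \<inter> B)" using p(2) by blast
    qed
  qed
  have inj2: "inj_on \<Phi> (fixc G S (A \<inter> B))"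
  proof (rule inj_on_subset[OF inj])
    show "fixc G S (A \<inter> B) \<subseteq> lcosets (A \<inter> B)" unfolding fixc_def by blast
  qed
  have "card (fixc G S (A \<inter> B)) = card (fixc G S A \<times> fixc G S B)"
    using card_image[OF inj2] fimg by simp
  then show ?thesis using fAB ceq by (simp add: card_cartesian_product)
qed

end

locale pf = group G for G :: "('a, 'c) monoid_scheme" (structure) +
  fixes H :: "'a \<Rightarrow> 'a set"
  assumes H_sub: "\<And>\<gamma>. \<gamma> \<in> carrier G - {\<one>} \<Longrightarrow> subgroup (H \<gamma>) G"
    and H_fin: "\<And>\<gamma>. \<gamma> \<in> carrier G - {\<one>} \<Longrightarrow> finite (lcosets (H \<gamma>))"
    and H_notin: "\<And>\<gamma>. \<gamma> \<in> carrier G - {\<one>} \<Longrightarrow> \<gamma> \<notin> H \<gamma>"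
begin

abbreviation K where "K F \<equiv> sub_int G H F"

lemma fin_index_iff: "F \<in> fin_index G \<longleftrightarrow> finite F \<and> F \<subseteq> carrier G - {\<one>}"
  unfolding fin_index_def by simp

lemma K_empty: "K {} = carrier G"
  unfolding sub_int_def by simp

lemma K_sub: assumes F: "F \<subseteq> carrier G - {\<one>}" shows "subgroup (K F) G"
proof (cases "F = {}")
  case True then show ?thesis using K_empty subgroup_self by simp
next
  case False
  have sub: "\<And>\<gamma>. \<gamma> \<in> F \<Longrightarrow> H \<gamma> \<subseteq> carrier G"
    using H_sub F subgroup.subset by blast
  have "K F = \<Inter>(H ` F)"
  proof
    show "K F \<subseteq> \<Inter>(H ` F)" unfolding sub_int_def by blast
    show "\<Inter>(H ` F) \<subseteq> K F" unfolding sub_int_def using sub False by blast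
  qed
  moreover have "subgroup (\<Inter>(H ` F)) G"
  proof (rule subgroups_Inter)
    show "H ` F \<noteq> {}" using False by simp
    fix A assume "A \<in> H ` F"
    then show "subgroup A G" using H_sub F by blast
  qed
  ultimately show ?thesis by simp
qed

lemma K_anti: "F \<subseteq> F' \<Longrightarrow> K F' \<subseteq> K F"
  unfolding sub_int_def by blast

lemma K_ins: "K (insert \<gamma> F) = K F \<inter> H \<gamma>"
  unfolding sub_int_def by blast

lemma K_single: "\<gamma> \<in> carrier G - {\<one>} \<Longrightarrow> K {\<gamma>} = H \<gamma>"
  unfolding sub_int_def using H_sub subgroup.subset by blast

lemma lcosets_carrier: "lcosets (carrier G) = {carrier G}"
proof -
  have "\<And>a. a \<in> carrier G \<Longrightarrow> a <# carrier G = carrier G"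
  proof -
    fix a assume a: "a \<in> carrier G"
    have "a <# carrier G = \<one> <# carrier G"
      using lc_eq[OF subgroup_self a one_closed] a by simp
    then show "a <# carrier G = carrier G" using lc_one[OF subgroup_self] by simp
  qed
  then show ?thesis unfolding LCOSETS_def by auto
qed

lemma fixc_carrier: "S \<subseteq> carrier G \<Longrightarrow> fixc G S (carrier G) = {carrier G}"
proof -
  assume S: "S \<subseteq> carrier G"
  have "carrier G \<in> fixc G S (carrier G)"
    using fix_lc_iff[OF subgroup_self S one_closed] lc_one[OF subgroup_self] S by auto
  then show ?thesis unfolding fixc_def using lcosets_carrier by auto
qed

lemma count:
  fixes n :: "'a \<Rightarrow> int"
  assumes S: "S \<subseteq> carrier G"
    and cop: "\<forall>\<gamma>\<in>carrier G - {\<one>}. \<forall>\<delta>\<in>carrier G - {\<one>}. \<gamma> \<noteq> \<delta> \<longrightarrow> coprime (n \<gamma>) (n \<delta>)"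
    and pow: "\<forall>\<gamma>\<in>carrier G - {\<one>}. \<exists>k::nat. int (card (lcosets (H \<gamma>))) = n \<gamma> ^ k"
    and F: "finite F" "F \<subseteq> carrier G - {\<one>}"
  shows "finite (lcosets (K F)) \<and> card (lcosets (K F)) = (\<Prod>\<gamma>\<in>F. card (lcosets (H \<gamma>))) \<and>
         card (fixc G S (K F)) = (\<Prod>\<gamma>\<in>F. card (fixc G S (H \<gamma>)))"
  using F
proof (induction F rule: finite_induct)
  case empty
  show ?case using K_empty lcosets_carrier fixc_carrier[OF S] by simp
next
  case (insert \<gamma> F)
  have g: "\<gamma> \<in> carrier G - {\<one>}" and Fs: "F \<subseteq> carrier G - {\<one>}" using insert.prems by auto
  have IH: "finite (lcosets (K F)) \<and> card (lcosets (K F)) = (\<Prod>\<gamma>\<in>F. card (lcosets (H \<gamma>))) \<and>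
         card (fixc G S (K F)) = (\<Prod>\<gamma>\<in>F. card (fixc G S (H \<gamma>)))" using insert.IH Fs by blast
  have cop2: "coprime (card (lcosets (K F))) (card (lcosets (H \<gamma>)))"
  proof -
    have "coprime (\<Prod>\<delta>\<in>F. card (lcosets (H \<delta>))) (card (lcosets (H \<gamma>)))"
    proof (rule prod_coprime_left)
      fix \<delta> assume d: "\<delta> \<in> F"
      then have d': "\<delta> \<in> carrier G - {\<one>}" "\<delta> \<noteq> \<gamma>" using Fs insert.hyps by auto
      obtain j where j: "int (card (lcosets (H \<delta>))) = n \<delta> ^ j" using pow d' by blast
      obtain k where k: "int (card (lcosets (H \<gamma>))) = n \<gamma> ^ k" using pow g by blast
      have "coprime (n \<delta>) (n \<gamma>)" using cop d' g by blast
      then have "coprime (n \<delta> ^ j) (n \<gamma> ^ k)" by simp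
      then have "coprime (int (card (lcosets (H \<delta>)))) (int (card (lcosets (H \<gamma>))))" using j k by simp
      then show "coprime (card (lcosets (H \<delta>))) (card (lcosets (H \<gamma>)))" by simp
    qed
    then show ?thesis using IH by simp
  qed
  have c: "finite (lcosets (K F \<inter> H \<gamma>)) \<and>
         card (lcosets (K F \<inter> H \<gamma>)) = card (lcosets (K F)) * card (lcosets (H \<gamma>)) \<and>
         card (fixc G S (K F \<inter> H \<gamma>)) = card (fixc G S (K F)) * card (fixc G S (H \<gamma>))"
    by (rule crt[OF K_sub[OF Fs] H_sub[OF g] S _ H_fin[OF g] cop2]) (use IH in blast)
  show ?case unfolding K_ins using c IH insert.hyps by (simp add: mult.commute)
qed

end

locale pf2 = pf G H for G :: "('a, 'c) monoid_scheme" (structure) and H +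
  fixes n :: "'a \<Rightarrow> int"
  assumes cop: "\<forall>\<gamma>\<in>carrier G - {\<one>}. \<forall>\<delta>\<in>carrier G - {\<one>}. \<gamma> \<noteq> \<delta> \<longrightarrow> coprime (n \<gamma>) (n \<delta>)"
    and pow: "\<forall>\<gamma>\<in>carrier G - {\<one>}. \<exists>k::nat. int (card (lcosets (H \<gamma>))) = n \<gamma> ^ k"
    and cntbl: "countable (carrier G)"
begin

abbreviation I where "I \<equiv> fin_index G"
abbreviation X where "X F \<equiv> XF G H F"
abbreviation \<Omega> where "\<Omega> \<equiv> inv_lim G H"
abbreviation act where "act \<equiv> inv_lim_act G"

definition cyl :: "'a set \<Rightarrow> 'a set set \<Rightarrow> ('a set \<Rightarrow> 'a set) set" where
  "cyl F B = {x \<in> \<Omega>. x F \<in> B}"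

definition pt :: "'a \<Rightarrow> ('a set \<Rightarrow> 'a set)" where
  "pt a = (\<lambda>F\<in>I. a <# K F)"

lemma I_sub: "F \<in> I \<Longrightarrow> F \<subseteq> carrier G - {\<one>}"
  using fin_index_iff by blast

lemma KI: "F \<in> I \<Longrightarrow> subgroup (K F) G"
  using K_sub I_sub by blast

lemma X_fin: "F \<in> I \<Longrightarrow> finite (X F)"
proof -
  assume F: "F \<in> I"
  have "finite F" "F \<subseteq> carrier G - {\<one>}" using F fin_index_iff by auto
  from count[OF _ cop pow this, of "{}"] show "finite (X F)" unfolding XF_def by simp
qed

lemma X_iff: "q \<in> X F \<longleftrightarrow> (\<exists>a\<in>carrier G. q = a <# K F)"
  unfolding XF_def by (rule lcosets_iff)

lemma X_ne: "F \<in> I \<Longrightarrow> X F \<noteq> {}"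
  using X_iff[of "\<one> <# K F" F] by blast

lemma Omega_sub: "\<Omega> \<subseteq> (\<Pi>\<^sub>E F\<in>I. X F)"
  unfolding inv_lim_def by blast

lemma Om_X: "x \<in> \<Omega> \<Longrightarrow> F \<in> I \<Longrightarrow> x F \<in> X F"
  using Omega_sub by blast

lemma Om_ext: "x \<in> \<Omega> \<Longrightarrow> F \<notin> I \<Longrightarrow> x F = undefined"
  using Omega_sub by blast

lemma Om_rep: "x \<in> \<Omega> \<Longrightarrow> F \<in> I \<Longrightarrow> \<exists>a\<in>carrier G. x F = a <# K F"
  using Om_X X_iff by blast

lemma Om_cond:
  assumes "x \<in> \<Omega>" "F \<in> I" "F' \<in> I" "F \<subseteq> F'" "g \<in> x F'"
  shows "x F = g <# K F"
proof -
  have "\<forall>F\<in>I. \<forall>F'\<in>I. F \<subseteq> F' \<longrightarrow> (\<forall>g\<in>x F'. x F = g <# K F)"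
    using assms(1) unfolding inv_lim_def by simp
  then show ?thesis using assms(2-5) by blast
qed

lemma Om_compat:
  assumes x: "x \<in> \<Omega>" and F: "F \<in> I" "F' \<in> I" "F \<subseteq> F'" and a: "a \<in> carrier G" "x F' = a <# K F'"
  shows "x F = a <# K F"
proof -
  have "a \<in> x F'" using a lc_self KI[OF F(2)] by simp
  then show ?thesis using Om_cond x F by simp
qed

lemma Om_pj:
  assumes x: "x \<in> \<Omega>" and F: "F \<in> I" "F' \<in> I" "F \<subseteq> F'"
  shows "x F = pj G (K F) (x F')"
proof -
  obtain a where a: "a \<in> carrier G" "x F' = a <# K F'" using Om_rep x F by blast
  have "x F = a <# K F" using Om_compat[OF x F a] .
  moreover have "pj G (K F) (x F') = a <# K F"
    using a pj_lc[OF KI[OF F(2)] KI[OF F(1)] K_anti[OF F(3)] a(1)] by simp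
  ultimately show ?thesis by simp
qed

lemma Om_iff:
  "x \<in> \<Omega> \<longleftrightarrow> x \<in> (\<Pi>\<^sub>E F\<in>I. X F) \<and> (\<forall>F\<in>I. \<forall>F'\<in>I. F \<subseteq> F' \<longrightarrow> x F = pj G (K F) (x F'))"
proof
  assume "x \<in> \<Omega>" then show "x \<in> (\<Pi>\<^sub>E F\<in>I. X F) \<and> (\<forall>F\<in>I. \<forall>F'\<in>I. F \<subseteq> F' \<longrightarrow> x F = pj G (K F) (x F'))"
    using Omega_sub Om_pj[of x] by blast
next
  assume h: "x \<in> (\<Pi>\<^sub>E F\<in>I. X F) \<and> (\<forall>F\<in>I. \<forall>F'\<in>I. F \<subseteq> F' \<longrightarrow> x F = pj G (K F) (x F'))"
  have c: "\<And>F F' g. F \<in> I \<Longrightarrow> F' \<in> I \<Longrightarrow> F \<subseteq> F' \<Longrightarrow> g \<in> x F' \<Longrightarrow> x F = g <# K F"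
  proof -
    fix F F' g assume F: "F \<in> I" "F' \<in> I" "F \<subseteq> F'" and g: "g \<in> x F'"
    have "x F' \<in> X F'" using h F by blast
    then obtain a where a: "a \<in> carrier G" "x F' = a <# K F'" using X_iff by blast
    have "x F = pj G (K F) (x F')" using h F by blast
    then have "x F = a <# K F"
      using a pj_lc[OF KI[OF F(2)] KI[OF F(1)] K_anti[OF F(3)] a(1)] by simp
    moreover have "g \<in> a <# K F" using g a K_anti[OF F(3)] unfolding l_coset_def by blast
    ultimately show "x F = g <# K F" using lc_mem_eq[OF KI[OF F(1)] a(1)] by simp
  qed
  have h1: "x \<in> (\<Pi>\<^sub>E F\<in>I. X F)" using h by blast
  show "x \<in> \<Omega>" unfolding inv_lim_def using h1 c by blast
qed

lemma pt_in: assumes a: "a \<in> carrier G" shows "pt a \<in> \<Omega>"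
proof -
  have "pt a \<in> (\<Pi>\<^sub>E F\<in>I. X F)" unfolding pt_def using a X_iff by auto
  moreover have "\<forall>F\<in>I. \<forall>F'\<in>I. F \<subseteq> F' \<longrightarrow> (\<forall>g\<in>pt a F'. pt a F = g <# K F)"
  proof (intro ballI impI)
    fix F F' g assume F: "F \<in> I" "F' \<in> I" "F \<subseteq> F'" and g: "g \<in> pt a F'"
    have "g \<in> a <# K F" using g F K_anti[OF F(3)] unfolding pt_def l_coset_def by auto
    then show "pt a F = g <# K F" using lc_mem_eq[OF KI[OF F(1)] a] F unfolding pt_def by simp
  qed
  ultimately show ?thesis unfolding inv_lim_def by simp
qed

lemma pt_app: "F \<in> I \<Longrightarrow> pt a F = a <# K F"
  unfolding pt_def by simp

lemma act_app: "F \<in> I \<Longrightarrow> act g x F = g <# x F"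
  unfolding inv_lim_act_def by simp

lemma act_in: assumes g: "g \<in> carrier G" and x: "x \<in> \<Omega>" shows "act g x \<in> \<Omega>"
proof -
  have "act g x \<in> (\<Pi>\<^sub>E F\<in>I. X F)"
  proof
    fix F assume F: "F \<in> I"
    obtain a where a: "a \<in> carrier G" "x F = a <# K F" using Om_rep x F by blast
    then have "act g x F = (g \<otimes> a) <# K F" using act_app F lc_assoc[OF KI[OF F] g a(1)] by simp
    then show "act g x F \<in> X F" using X_iff g a by auto
  next
    fix F assume "F \<notin> I" then show "act g x F = undefined" unfolding inv_lim_act_def by simp
  qed
  moreover have "\<forall>F\<in>I. \<forall>F'\<in>I. F \<subseteq> F' \<longrightarrow> act g x F = pj G (K F) (act g x F')"
  proof (intro ballI impI)
    fix F F' assume F: "F \<in> I" "F' \<in> I" "F \<subseteq> F'"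
    obtain a where a: "a \<in> carrier G" "x F' = a <# K F'" using Om_rep x F by blast
    have xF: "x F = a <# K F" using Om_compat[OF x F a] .
    have ga: "g \<otimes> a \<in> carrier G" using g a by simp
    have "act g x F' = (g \<otimes> a) <# K F'" using act_app F a lc_assoc[OF KI[OF F(2)] g a(1)] by simp
    then have "pj G (K F) (act g x F') = (g \<otimes> a) <# K F"
      using pj_lc[OF KI[OF F(2)] KI[OF F(1)] K_anti[OF F(3)] ga] by simp
    moreover have "act g x F = (g \<otimes> a) <# K F" using act_app F xF lc_assoc[OF KI[OF F(1)] g a(1)] by simp
    ultimately show "act g x F = pj G (K F) (act g x F')" by simp
  qed
  ultimately show ?thesis using Om_iff by blast
qed

lemma act_one: assumes x: "x \<in> \<Omega>" shows "act \<one> x = x"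
proof
  fix F show "act \<one> x F = x F"
  proof (cases "F \<in> I")
    case True
    obtain a where a: "a \<in> carrier G" "x F = a <# K F" using Om_rep x True by blast
    then show ?thesis using act_app[OF True] lc_assoc[OF KI[OF True] one_closed a(1)] by simp
  next
    case False then show ?thesis using Om_ext[OF x False] unfolding inv_lim_act_def by simp
  qed
qed

lemma act_mult: assumes g: "g \<in> carrier G" and h: "h \<in> carrier G" and x: "x \<in> \<Omega>"
  shows "act (g \<otimes> h) x = act g (act h x)"
proof
  fix F show "act (g \<otimes> h) x F = act g (act h x) F"
  proof (cases "F \<in> I")
    case True
    obtain a where a: "a \<in> carrier G" "x F = a <# K F" using Om_rep x True by blast
    have "act (g \<otimes> h) x F = (g \<otimes> h \<otimes> a) <# K F"
      using act_app[OF True] a lc_assoc[OF KI[OF True] _ a(1), of "g \<otimes> h"] g h by simp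
    moreover have "act g (act h x) F = (g \<otimes> (h \<otimes> a)) <# K F"
      using act_app[OF True] a lc_assoc[OF KI[OF True] h a(1)] lc_assoc[OF KI[OF True] g, of "h \<otimes> a"] g h by simp
    ultimately show ?thesis using g h a by (simp add: m_assoc)
  next
    case False then show ?thesis unfolding inv_lim_act_def by simp
  qed
qed

lemma act_inv: assumes g: "g \<in> carrier G" and x: "x \<in> \<Omega>" shows "act (inv g) (act g x) = x" "act g (act (inv g) x) = x"
  using act_mult[of "inv g" g x] act_mult[of g "inv g" x] act_one[OF x] g x by simp_all

lemma act_pt: "g \<in> carrier G \<Longrightarrow> a \<in> carrier G \<Longrightarrow> act g (pt a) = pt (g \<otimes> a)"
  unfolding inv_lim_act_def pt_def using lc_assoc KI by (auto intro!: restrict_ext)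

end

context pf2
begin

abbreviation P where "P \<equiv> product_topology (\<lambda>F. discrete_topology (X F)) I"
abbreviation T where "T \<equiv> inv_lim_top G H"

lemma T_def': "T = subtopology P \<Omega>"
  unfolding inv_lim_top_def by simp

lemma topP: "topspace P = (\<Pi>\<^sub>E F\<in>I. X F)"
  by simp

lemma topT: "topspace T = \<Omega>"
  unfolding T_def' using Omega_sub by auto

lemma cyl_sub: "cyl F B \<subseteq> \<Omega>"
  unfolding cyl_def by blast

lemma cyl_open: assumes F: "F \<in> I" shows "openin T (cyl F B)"
proof -
  have "openin P {x \<in> topspace P. x F \<in> B \<inter> X F}"
    by (rule openin_continuous_map_preimage[OF continuous_map_product_projection[OF F]]) simp
  moreover have "cyl F B = {x \<in> topspace P. x F \<in> B \<inter> X F} \<inter> \<Omega>"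
    unfolding cyl_def using Omega_sub Om_X F by auto
  ultimately show ?thesis unfolding T_def' openin_subtopology by blast
qed

lemma basis:
  assumes U: "openin T U" and z: "z \<in> U"
  shows "\<exists>F\<in>I. cyl F {z F} \<subseteq> U"
proof -
  obtain V where V: "openin P V" "U = V \<inter> \<Omega>" using U unfolding T_def' openin_subtopology by blast
  have zV: "z \<in> V" and zO: "z \<in> \<Omega>" using V z by auto
  obtain W where W: "finite {i \<in> I. W i \<noteq> topspace (discrete_topology (X i))}"
      "\<forall>i\<in>I. openin (discrete_topology (X i)) (W i)" "z \<in> Pi\<^sub>E I W" "Pi\<^sub>E I W \<subseteq> V"
  proof -
    have h: "\<forall>x\<in>V. \<exists>W. finite {i \<in> I. W i \<noteq> topspace (discrete_topology (X i))} \<and>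
      (\<forall>i\<in>I. openin (discrete_topology (X i)) (W i)) \<and> x \<in> Pi\<^sub>E I W \<and> Pi\<^sub>E I W \<subseteq> V"
      using V(1) unfolding openin_product_topology_alt .
    from bspec[OF h zV] show ?thesis using that by (elim exE conjE) 
  qed
  define J where "J = {i \<in> I. W i \<noteq> X i}"
  have fJ: "finite J" using W(1) unfolding J_def by simp
  define F where "F = \<Union>J"
  have JI: "J \<subseteq> I" unfolding J_def by blast
  have "finite F" unfolding F_def
    by (rule finite_Union[OF fJ]) (use JI fin_index_iff in blast)
  moreover have "F \<subseteq> carrier G - {\<one>}" unfolding F_def using JI fin_index_iff by blast
  ultimately have FI: "F \<in> I" using fin_index_iff by blast
  have "cyl F {z F} \<subseteq> U"
  proof
    fix y assume y: "y \<in> cyl F {z F}"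
    then have yO: "y \<in> \<Omega>" and yF: "y F = z F" unfolding cyl_def by auto
    have "y \<in> Pi\<^sub>E I W"
    proof (rule PiE_I)
      fix i assume i: "i \<in> I"
      show "y i \<in> W i"
      proof (cases "i \<in> J")
        case True
        then have iF: "i \<subseteq> F" unfolding F_def by blast
        have "y i = pj G (K i) (y F)" using Om_pj[OF yO i FI iF] .
        also have "\<dots> = pj G (K i) (z F)" using yF by simp
        also have "\<dots> = z i" using Om_pj[OF zO i FI iF] by simp
        finally show ?thesis using W(3) i by auto
      next
        case False
        then have "W i = X i" unfolding J_def using i by blast
        then show ?thesis using Om_X[OF yO i] by simp
      qed
    next
      fix i assume "i \<notin> I" then show "y i = undefined" using Om_ext[OF yO] by blast
    qed
    then show "y \<in> U" using W(4) V(2) yO by blast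
  qed
  then show ?thesis using FI by blast
qed

lemma cyl_closedP:
  assumes F: "F \<in> I" and F': "F' \<in> I"
  shows "closedin P {x \<in> topspace P. x F = pj G (K F) (x F')}"
proof -
  define A where "A q = {x \<in> topspace P. x F' \<in> {q} \<inter> X F'}" for q
  define B where "B q = {x \<in> topspace P. x F \<in> {pj G (K F) q} \<inter> X F}" for q
  have cA: "closedin P (A q)" for q unfolding A_def
    by (rule closedin_continuous_map_preimage[OF continuous_map_product_projection[OF F']]) simp
  have cB: "closedin P (B q)" for q unfolding B_def
    by (rule closedin_continuous_map_preimage[OF continuous_map_product_projection[OF F]]) simp
  have eq: "{x \<in> topspace P. x F = pj G (K F) (x F')} = \<Union>((\<lambda>q. A q \<inter> B q) ` X F')"
  proof
    show "{x \<in> topspace P. x F = pj G (K F) (x F')} \<subseteq> \<Union>((\<lambda>q. A q \<inter> B q) ` X F')"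
    proof
      fix x assume x: "x \<in> {x \<in> topspace P. x F = pj G (K F) (x F')}"
      then have xP: "x \<in> topspace P" and xe: "x F = pj G (K F) (x F')" by auto
      have "x F' \<in> X F'" "x F \<in> X F" using PiE_mem[OF xP[unfolded topP]] F F' by blast+
      with xP xe have "x \<in> A (x F') \<inter> B (x F')" unfolding A_def B_def by auto
      then show "x \<in> \<Union>((\<lambda>q. A q \<inter> B q) ` X F')" using \<open>x F' \<in> X F'\<close> by blast
    qed
    show "\<Union>((\<lambda>q. A q \<inter> B q) ` X F') \<subseteq> {x \<in> topspace P. x F = pj G (K F) (x F')}"
      unfolding A_def B_def by auto
  qed
  show ?thesis unfolding eq
    by (rule closedin_Union) (use X_fin[OF F'] cA cB in auto)
qed

lemma closed_Omega: "closedin P \<Omega>"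
proof -
  define C where "C = {{x \<in> topspace P. x F = pj G (K F) (x F')} | F F'. F \<in> I \<and> F' \<in> I \<and> F \<subseteq> F'}"
  have eq: "\<Omega> = \<Inter>(insert (topspace P) C)"
  proof
    show "\<Omega> \<subseteq> \<Inter>(insert (topspace P) C)"
      unfolding C_def using Omega_sub Om_pj by auto
  next
    show "\<Inter>(insert (topspace P) C) \<subseteq> \<Omega>"
    proof
      fix x assume x: "x \<in> \<Inter>(insert (topspace P) C)"
      then have x1: "x \<in> (\<Pi>\<^sub>E F\<in>I. X F)" by simp
      have "\<forall>F\<in>I. \<forall>F'\<in>I. F \<subseteq> F' \<longrightarrow> x F = pj G (K F) (x F')"
      proof (intro ballI impI)
        fix F F' assume "F \<in> I" "F' \<in> I" "F \<subseteq> F'"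
        then have "{x \<in> topspace P. x F = pj G (K F) (x F')} \<in> C" unfolding C_def by blast
        then show "x F = pj G (K F) (x F')" using x by blast
      qed
      then show "x \<in> \<Omega>" using Om_iff x1 by blast
    qed
  qed
  show ?thesis unfolding eq
  proof (rule closedin_Inter)
    fix S assume "S \<in> insert (topspace P) C"
    then show "closedin P S" unfolding C_def using cyl_closedP closedin_topspace[of P, unfolded topP] by auto
  qed simp
qed

lemma compactP: "compact_space P"
  unfolding compact_space_product_topology using X_fin compact_space_discrete_topology by blast

lemma compactT: "compact_space T"
  unfolding T_def' by (rule compact_space_subtopology[OF closedin_compact_space[OF compactP closed_Omega]])

lemma countable_I: "countable I"
proof -
  have "I \<subseteq> {A. finite A \<and> A \<subseteq> carrier G}" unfolding fin_index_def by blast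
  then show ?thesis using countable_Collect_finite_subset[OF cntbl] countable_subset by blast
qed

lemma metrizableT: "metrizable_space T"
proof -
  have "metrizable_space P"
    unfolding metrizable_space_product_topology
    using countable_subset[OF _ countable_I] by auto
  then show ?thesis unfolding T_def' by (rule metrizable_space_subtopology)
qed

lemma cont_disc:
  assumes F: "F \<in> I" and \<phi>: "\<And>p. p \<in> X F \<Longrightarrow> \<phi> p \<in> Y"
  shows "continuous_map T (discrete_topology Y) (\<lambda>x. \<phi> (x F))"
  unfolding continuous_map_def
proof (intro conjI allI impI)
  show "(\<lambda>x. \<phi> (x F)) \<in> topspace T \<rightarrow> topspace (discrete_topology Y)"
    using topT Om_X[OF _ F] \<phi> by auto
  fix U assume "openin (discrete_topology Y) U"
  have "{x \<in> topspace T. \<phi> (x F) \<in> U} = cyl F {p. \<phi> p \<in> U}"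
    unfolding topT cyl_def by simp
  then show "openin T {x \<in> topspace T. \<phi> (x F) \<in> U}" using cyl_open[OF F] by simp
qed

lemma cont_act: assumes g: "g \<in> carrier G" shows "continuous_map T T (act g)"
proof -
  have "continuous_map T P (act g)"
    unfolding continuous_map_componentwise
  proof (intro conjI ballI)
    show "act g ` topspace T \<subseteq> extensional I" unfolding inv_lim_act_def by auto
    fix F assume F: "F \<in> I"
    have "\<And>p. p \<in> X F \<Longrightarrow> g <# p \<in> X F"
    proof -
      fix p assume "p \<in> X F"
      then obtain a where a: "a \<in> carrier G" "p = a <# K F" using X_iff by blast
      then have "g <# p = (g \<otimes> a) <# K F" using lc_assoc[OF KI[OF F] g a(1)] by simp
      then show "g <# p \<in> X F" using X_iff g a(1) by auto
    qed
    then have "continuous_map T (discrete_topology (X F)) (\<lambda>x. g <# x F)"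
      using cont_disc[OF F] by blast
    moreover have "\<And>x. act g x F = g <# x F" using act_app[OF F] by simp
    ultimately show "continuous_map T (discrete_topology (X F)) (\<lambda>x. act g x F)" by simp
  qed
  moreover have "act g \<in> topspace T \<rightarrow> \<Omega>" using act_in g topT by auto
  ultimately show ?thesis unfolding T_def' by (rule continuous_map_into_subtopology)
qed

lemma top_act: "top_action G T act"
  unfolding top_action_def
proof (intro conjI ballI)
  fix x assume "x \<in> topspace T" then show "act \<one> x = x" using act_one topT by simp
next
  fix g h x assume "g \<in> carrier G" "h \<in> carrier G" "x \<in> topspace T"
  then show "act (g \<otimes> h) x = act g (act h x)" using act_mult topT by simp
next
  fix g assume g: "g \<in> carrier G"
  have "homeomorphic_maps T T (act g) (act (inv g))"
    unfolding homeomorphic_maps_def using cont_act g act_inv topT by simp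
  then show "homeomorphic_map T T (act g)" using homeomorphic_map_maps by blast
qed

end

context pf2
begin

lemma minimalT: "minimal_action G T act"
  unfolding minimal_action_def
proof (intro ballI)
  fix x assume x: "x \<in> topspace T"
  then have xO: "x \<in> \<Omega>" using topT by simp
  show "T closure_of (\<lambda>g. act g x) ` carrier G = topspace T"
  proof
    show "T closure_of (\<lambda>g. act g x) ` carrier G \<subseteq> topspace T" by (rule closure_of_subset_topspace)
  next
    show "topspace T \<subseteq> T closure_of (\<lambda>g. act g x) ` carrier G"
    proof
      fix z assume z: "z \<in> topspace T"
      then have zO: "z \<in> \<Omega>" using topT by simp
      have cl: "\<forall>W. z \<in> W \<and> openin T W \<longrightarrow> (\<exists>y. y \<in> (\<lambda>g. act g x) ` carrier G \<and> y \<in> W)"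
      proof (intro allI impI)
        fix W assume W: "z \<in> W \<and> openin T W"
        obtain F where F: "F \<in> I" "cyl F {z F} \<subseteq> W" using basis[of W z] W by blast
        obtain a where a: "a \<in> carrier G" "z F = a <# K F" using Om_rep zO F(1) by blast
        obtain b where b: "b \<in> carrier G" "x F = b <# K F" using Om_rep xO F(1) by blast
        define g where "g = a \<otimes> inv b"
        have g: "g \<in> carrier G" using a b g_def by simp
        have "act g x F = g <# (b <# K F)" using act_app[OF F(1)] b by simp
        also have "\<dots> = (g \<otimes> b) <# K F" using lc_assoc[OF KI[OF F(1)] g b(1)] .
        also have "g \<otimes> b = a" using a b g_def by (simp add: m_assoc)
        finally have "act g x F = z F" using a by simp
        then have "act g x \<in> cyl F {z F}" unfolding cyl_def using act_in[OF g xO] by simp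
        then show "\<exists>y. y \<in> (\<lambda>g. act g x) ` carrier G \<and> y \<in> W" using F(2) g by blast
      qed
      show "z \<in> T closure_of (\<lambda>g. act g x) ` carrier G" by (rule in_closure_of[THEN iffD2, OF conjI[OF z cl]])
    qed
  qed
qed

definition Efix where "Efix g = {x \<in> \<Omega>. act g x = x}"

lemma U_open: assumes g: "g \<in> carrier G" shows "openin T (\<Omega> - Efix g)"
proof (subst openin_subopen, intro ballI)
  fix x assume x: "x \<in> \<Omega> - Efix g"
  then have xO: "x \<in> \<Omega>" and ne: "act g x \<noteq> x" unfolding Efix_def by auto
  have "\<exists>F. act g x F \<noteq> x F" using ne by (simp add: fun_eq_iff)
  then obtain F where F: "act g x F \<noteq> x F" by blast
  have FI: "F \<in> I"
  proof (rule ccontr)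
    assume "F \<notin> I"
    then have "act g x F = undefined" "x F = undefined" using Om_ext[OF xO] unfolding inv_lim_act_def by auto
    then show False using F by simp
  qed
  have "cyl F {x F} \<subseteq> \<Omega> - Efix g"
  proof
    fix y assume y: "y \<in> cyl F {x F}"
    then have yO: "y \<in> \<Omega>" and yF: "y F = x F" unfolding cyl_def by auto
    have "act g y F = g <# x F" using act_app[OF FI] yF by simp
    also have "\<dots> = act g x F" using act_app[OF FI] by simp
    finally have "act g y F \<noteq> y F" using F yF by simp
    then have "act g y \<noteq> y" by metis
    then show "y \<in> \<Omega> - Efix g" using yO unfolding Efix_def by blast
  qed
  moreover have "x \<in> cyl F {x F}" unfolding cyl_def using xO by simp
  ultimately show "\<exists>T'. openin T T' \<and> x \<in> T' \<and> T' \<subseteq> \<Omega> - Efix g" using cyl_open[OF FI] by blast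
qed

lemma U_dense: assumes g: "g \<in> carrier G" "g \<noteq> \<one>" shows "T closure_of (\<Omega> - Efix g) = topspace T"
proof
  show "T closure_of (\<Omega> - Efix g) \<subseteq> topspace T" by (rule closure_of_subset_topspace)
next
  show "topspace T \<subseteq> T closure_of (\<Omega> - Efix g)"
  proof
    fix z assume z: "z \<in> topspace T"
    then have zO: "z \<in> \<Omega>" using topT by simp
    have cl: "\<forall>W. z \<in> W \<and> openin T W \<longrightarrow> (\<exists>y. y \<in> \<Omega> - Efix g \<and> y \<in> W)"
    proof (intro allI impI)
      fix W assume W: "z \<in> W \<and> openin T W"
      obtain F where F: "F \<in> I" "cyl F {z F} \<subseteq> W" using basis[of W z] W by blast
      obtain a where a: "a \<in> carrier G" "z F = a <# K F" using Om_rep zO F(1) by blast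
      have yO: "pt a \<in> \<Omega>" using pt_in[OF a(1)] .
      have "pt a \<in> cyl F {z F}" unfolding cyl_def using yO pt_app[OF F(1)] a by simp
      moreover have "pt a \<notin> Efix g"
      proof
        assume "pt a \<in> Efix g"
        then have e: "act g (pt a) = pt a" unfolding Efix_def by blast
        define \<delta> where "\<delta> = inv a \<otimes> g \<otimes> a"
        have dc: "\<delta> \<in> carrier G" using \<delta>_def a g by simp
        have "\<delta> \<noteq> \<one>"
        proof
          assume "\<delta> = \<one>"
          then have "a \<otimes> \<delta> \<otimes> inv a = \<one>" using a by simp
          moreover have "a \<otimes> \<delta> \<otimes> inv a = g" unfolding \<delta>_def using a(1) g(1)
            by (metis inv_closed m_assoc m_closed r_inv l_one r_one)
          ultimately show False using g by simp
        qed
        then have d: "\<delta> \<in> carrier G - {\<one>}" using dc by simp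
        have dI: "{\<delta>} \<in> I" using d fin_index_iff by simp
        have "act g (pt a) {\<delta>} = pt a {\<delta>}" using e by simp
        then have "g <# (a <# K {\<delta>}) = a <# K {\<delta>}" using act_app[OF dI] pt_app[OF dI] by simp
        then have "\<delta> \<in> K {\<delta>}" using lc_fix_iff[OF KI[OF dI] g(1) a(1)] \<delta>_def by simp
        then show False using H_notin[OF d] K_single[OF d] by simp
      qed
      ultimately show "\<exists>y. y \<in> \<Omega> - Efix g \<and> y \<in> W" using yO F(2) by blast
    qed
    show "z \<in> T closure_of (\<Omega> - Efix g)" by (rule in_closure_of[THEN iffD2, OF conjI[OF z cl]])
  qed
qed

lemma comeagerT:
  assumes ne: "carrier G - {\<one>} \<noteq> {}"
  shows "comeager_in T (free_points G T act)"
proof -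
  define f where "f = from_nat_into (carrier G - {\<one>})"
  have cD: "countable (carrier G - {\<one>})" using cntbl by simp
  have rf: "range f = carrier G - {\<one>}" unfolding f_def using range_from_nat_into[OF ne cD] .
  define U where "U k = \<Omega> - Efix (f k)" for k
  have "\<forall>k. openin T (U k) \<and> T closure_of (U k) = topspace T"
  proof
    fix k
    have "f k \<in> carrier G - {\<one>}" using rf by blast
    then show "openin T (U k) \<and> T closure_of (U k) = topspace T"
      unfolding U_def using U_open U_dense by simp
  qed
  moreover have "(\<Inter>k. U k) \<subseteq> free_points G T act"
  proof
    fix x assume x: "x \<in> (\<Inter>k. U k)"
    have xO: "x \<in> \<Omega>" using x unfolding U_def by blast
    have "\<forall>g\<in>carrier G. act g x = x \<longrightarrow> g = \<one>"
    proof (intro ballI impI)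
      fix g assume g: "g \<in> carrier G" "act g x = x"
      show "g = \<one>"
      proof (rule ccontr)
        assume "g \<noteq> \<one>"
        then have "g \<in> range f" using rf g by blast
        then obtain k where k: "g = f k" by blast
        have "x \<in> U k" using x by blast
        then show False using g xO k unfolding U_def Efix_def by blast
      qed
    qed
    then show "x \<in> free_points G T act" unfolding free_points_def using xO topT by simp
  qed
  ultimately show ?thesis unfolding comeager_in_def by blast
qed

end

context pf2
begin

definition Cyl where "Cyl = {cyl F B | F B. F \<in> I \<and> B \<subseteq> X F}"

lemma Cyl_I: "F \<in> I \<Longrightarrow> B \<subseteq> X F \<Longrightarrow> cyl F B \<in> Cyl"
  unfolding Cyl_def by blast

lemma Cyl_E: assumes "C \<in> Cyl" obtains F B where "F \<in> I" "B \<subseteq> X F" "C = cyl F B"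
  using assms unfolding Cyl_def by blast

lemma Cyl_sub: "Cyl \<subseteq> Pow \<Omega>"
  unfolding Cyl_def cyl_def by blast

lemma cyl_restrict: "F \<in> I \<Longrightarrow> cyl F B = cyl F (B \<inter> X F)"
  unfolding cyl_def using Om_X by blast

lemma empty_I: "{} \<in> I" using fin_index_iff by simp

lemma Un_I: "F \<in> I \<Longrightarrow> F' \<in> I \<Longrightarrow> F \<union> F' \<in> I"
  using fin_index_iff by simp

lemma cyl_refine:
  assumes F: "F \<in> I" "F'' \<in> I" "F \<subseteq> F''"
  shows "cyl F B = cyl F'' {q \<in> X F''. pj G (K F) q \<in> B}"
proof
  show "cyl F B \<subseteq> cyl F'' {q \<in> X F''. pj G (K F) q \<in> B}"
  proof
    fix x assume "x \<in> cyl F B"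
    then have x: "x \<in> \<Omega>" "x F \<in> B" unfolding cyl_def by auto
    have "x F = pj G (K F) (x F'')" using Om_pj[OF x(1) F] .
    then show "x \<in> cyl F'' {q \<in> X F''. pj G (K F) q \<in> B}"
      unfolding cyl_def using x Om_X[OF x(1) F(2)] by simp
  qed
next
  show "cyl F'' {q \<in> X F''. pj G (K F) q \<in> B} \<subseteq> cyl F B"
  proof
    fix x assume "x \<in> cyl F'' {q \<in> X F''. pj G (K F) q \<in> B}"
    then have x: "x \<in> \<Omega>" "pj G (K F) (x F'') \<in> B" unfolding cyl_def by auto
    have "x F = pj G (K F) (x F'')" using Om_pj[OF x(1) F] .
    then show "x \<in> cyl F B" unfolding cyl_def using x by simp
  qed
qed

lemma proj_cyl: assumes F: "F \<in> I" and B: "B \<subseteq> X F" shows "(\<lambda>x. x F) ` cyl F B = B"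
proof
  show "(\<lambda>x. x F) ` cyl F B \<subseteq> B" unfolding cyl_def by auto
  show "B \<subseteq> (\<lambda>x. x F) ` cyl F B"
  proof
    fix q assume q: "q \<in> B"
    then obtain a where a: "a \<in> carrier G" "q = a <# K F" using B X_iff by blast
    have "pt a \<in> cyl F B" unfolding cyl_def using pt_in[OF a(1)] pt_app[OF F] a q by simp
    moreover have "pt a F = q" using pt_app[OF F] a by simp
    ultimately show "q \<in> (\<lambda>x. x F) ` cyl F B" by force
  qed
qed

lemma cyl_inj: "F \<in> I \<Longrightarrow> B \<subseteq> X F \<Longrightarrow> B' \<subseteq> X F \<Longrightarrow> cyl F B = cyl F B' \<Longrightarrow> B = B'"
  using proj_cyl by metis

lemma Cyl_common:
  assumes "C1 \<in> Cyl" "C2 \<in> Cyl"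
  obtains F B1 B2 where "F \<in> I" "B1 \<subseteq> X F" "B2 \<subseteq> X F" "C1 = cyl F B1" "C2 = cyl F B2"
proof -
  obtain F1 B1 where 1: "F1 \<in> I" "B1 \<subseteq> X F1" "C1 = cyl F1 B1" using assms(1) Cyl_E by blast
  obtain F2 B2 where 2: "F2 \<in> I" "B2 \<subseteq> X F2" "C2 = cyl F2 B2" using assms(2) Cyl_E by blast
  define F where "F = F1 \<union> F2"
  have FI: "F \<in> I" unfolding F_def using Un_I 1 2 by simp
  have c1: "C1 = cyl F {q \<in> X F. pj G (K F1) q \<in> B1}"
    using 1 cyl_refine[OF 1(1) FI] unfolding F_def by simp
  have c2: "C2 = cyl F {q \<in> X F. pj G (K F2) q \<in> B2}"
    using 2 cyl_refine[OF 2(1) FI] unfolding F_def by simp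
  show ?thesis by (rule that[OF FI _ _ c1 c2]) auto
qed

lemma cyl_Un: "cyl F B1 \<union> cyl F B2 = cyl F (B1 \<union> B2)" unfolding cyl_def by blast
lemma cyl_Diff: "cyl F B1 - cyl F B2 = cyl F (B1 - B2)" unfolding cyl_def by blast
lemma cyl_Int2: "cyl F B1 \<inter> cyl F B2 = cyl F (B1 \<inter> B2)" unfolding cyl_def by blast

lemma Cyl_ring: "ring_of_sets \<Omega> Cyl"
proof (rule ring_of_setsI)
  show "Cyl \<subseteq> Pow \<Omega>" by (rule Cyl_sub)
  show "{} \<in> Cyl" using Cyl_I[OF empty_I, of "{}"] unfolding cyl_def by simp
next
  fix a b assume "a \<in> Cyl" "b \<in> Cyl"
  then obtain F B1 B2 where F: "F \<in> I" "B1 \<subseteq> X F" "B2 \<subseteq> X F" "a = cyl F B1" "b = cyl F B2"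
    using Cyl_common by blast
  show "a \<union> b \<in> Cyl" using F cyl_Un Cyl_I[OF F(1), of "B1 \<union> B2"] by simp
  show "a - b \<in> Cyl" using F cyl_Diff Cyl_I[OF F(1), of "B1 - B2"] by auto
qed

lemma Cyl_Int_stable: "Int_stable Cyl"
proof (rule Int_stableI)
  fix a b assume "a \<in> Cyl" "b \<in> Cyl"
  then obtain F B1 B2 where F: "F \<in> I" "B1 \<subseteq> X F" "B2 \<subseteq> X F" "a = cyl F B1" "b = cyl F B2"
    using Cyl_common by blast
  show "a \<inter> b \<in> Cyl" using F cyl_Int2 Cyl_I[OF F(1), of "B1 \<inter> B2"] by auto
qed

lemma Omega_cyl: "\<Omega> = cyl {} (X {})"
  unfolding cyl_def using Om_X[OF _ empty_I] by blast

lemma Omega_Cyl: "\<Omega> \<in> Cyl"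
  using Omega_cyl Cyl_I[OF empty_I] by simp

lemma Cyl_countable: "countable Cyl"
proof -
  have "Cyl = (\<Union>F\<in>I. (\<lambda>B. cyl F B) ` Pow (X F))" unfolding Cyl_def by blast
  moreover have "countable (\<Union>F\<in>I. (\<lambda>B. cyl F B) ` Pow (X F))"
  proof (rule countable_UN[OF countable_I])
    fix F assume "F \<in> I"
    then show "countable ((\<lambda>B. cyl F B) ` Pow (X F))" using X_fin by (simp add: countable_finite)
  qed
  ultimately show ?thesis by simp
qed

lemma Cyl_open: "C \<in> Cyl \<Longrightarrow> openin T C"
  using Cyl_E cyl_open by metis

lemma Cyl_closed: assumes "C \<in> Cyl" shows "closedin T C"
proof -
  obtain F B where F: "F \<in> I" "B \<subseteq> X F" "C = cyl F B" using assms Cyl_E by blast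
  have "topspace T - C = cyl F (X F - B)" unfolding topT F(3) cyl_def using Om_X[OF _ F(1)] by blast
  moreover have "C \<subseteq> topspace T" using F(3) cyl_sub topT by simp
  ultimately show ?thesis unfolding closedin_def using cyl_open[OF F(1)] by simp
qed

lemma sets_borel: "sets (borel_of T) = sigma_sets \<Omega> Cyl"
proof -
  have op: "{U. openin T U} \<subseteq> Pow (topspace T)" using openin_subset by blast
  have e: "sets (borel_of T) = sigma_sets \<Omega> {U. openin T U}"
    unfolding borel_of_def using sets_measure_of[OF op] topT by simp
  have "sigma_sets \<Omega> Cyl \<subseteq> sigma_sets \<Omega> {U. openin T U}"
    by (rule sigma_sets_mono') (use Cyl_open in blast)
  moreover have "sigma_sets \<Omega> {U. openin T U} \<subseteq> sigma_sets \<Omega> Cyl"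
  proof (rule sigma_sets_mono, rule subsetI)
    fix U assume "U \<in> {U. openin T U}"
    then have U: "openin T U" by simp
    have "U = \<Union>{C \<in> Cyl. C \<subseteq> U}"
    proof
      show "U \<subseteq> \<Union>{C \<in> Cyl. C \<subseteq> U}"
      proof
        fix z assume z: "z \<in> U"
        obtain F where F: "F \<in> I" "cyl F {z F} \<subseteq> U" using basis[OF U z] by blast
        have zO: "z \<in> \<Omega>" using z U openin_subset topT by blast
        have "cyl F {z F} \<in> Cyl" using Cyl_I[OF F(1)] Om_X[OF zO F(1)] by simp
        moreover have "z \<in> cyl F {z F}" unfolding cyl_def using zO by simp
        ultimately show "z \<in> \<Union>{C \<in> Cyl. C \<subseteq> U}" using F(2) by blast
      qed
    qed blast
    moreover have "\<Union>{C \<in> Cyl. C \<subseteq> U} \<in> sigma_sets \<Omega> Cyl"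
      by (rule sigma_sets_UNION) (use countable_subset[OF _ Cyl_countable] in auto)
    ultimately show "U \<in> sigma_sets \<Omega> Cyl" by simp
  qed
  ultimately show ?thesis using e by blast
qed

lemma refine_card:
  assumes F: "F \<in> I" "F'' \<in> I" "F \<subseteq> F''" and B: "B \<subseteq> X F"
  shows "card {q \<in> X F''. pj G (K F) q \<in> B} * card (X F) = card B * card (X F'')"
proof -
  have fin'': "finite (lcosets (K F''))" using X_fin[OF F(2)] unfolding XF_def .
  note fib = index_fib[OF KI[OF F(2)] KI[OF F(1)] K_anti[OF F(3)] fin'']
  define m where "m = card {q \<in> lcosets (K F''). pj G (K F) q = K F}"
  have fm: "\<forall>Q\<in>X F. card {q \<in> X F''. pj G (K F) q = Q} = m"
    using fib unfolding m_def XF_def by blast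
  have cX: "card (X F'') = card (X F) * m" using fib unfolding m_def XF_def by blast
  have finB: "finite B" using B X_fin[OF F(1)] finite_subset by blast
  have eq: "{q \<in> X F''. pj G (K F) q \<in> B} = (\<Union>Q\<in>B. {q \<in> X F''. pj G (K F) q = Q})" by blast
  have "card {q \<in> X F''. pj G (K F) q \<in> B} = (\<Sum>Q\<in>B. card {q \<in> X F''. pj G (K F) q = Q})"
    unfolding eq
  proof (rule card_UN_disjoint[OF finB])
    show "\<forall>i\<in>B. finite {q \<in> X F''. pj G (K F) q = i}" using X_fin[OF F(2)] by simp
    show "\<forall>i\<in>B. \<forall>j\<in>B. i \<noteq> j \<longrightarrow> {q \<in> X F''. pj G (K F) q = i} \<inter> {q \<in> X F''. pj G (K F) q = j} = {}"
      by blast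
  qed
  also have "\<dots> = (\<Sum>Q\<in>B. m)" using fm B by (intro sum.cong) auto
  also have "\<dots> = card B * m" by simp
  finally show ?thesis using cX by simp
qed

lemma X_pos: "F \<in> I \<Longrightarrow> card (X F) > 0"
  using X_fin X_ne card_gt_0_iff by blast

lemma ratio_refine:
  assumes F: "F \<in> I" "F'' \<in> I" "F \<subseteq> F''" and B: "B \<subseteq> X F"
  shows "real (card {q \<in> X F''. pj G (K F) q \<in> B}) / real (card (X F'')) = real (card B) / real (card (X F))"
proof -
  have e: "real (card {q \<in> X F''. pj G (K F) q \<in> B}) * real (card (X F)) = real (card B) * real (card (X F''))"
    using refine_card[OF F B] by (metis of_nat_mult)
  have "real (card (X F)) > 0" "real (card (X F'')) > 0" using X_pos F by auto
  then show ?thesis using e by (simp add: field_simps)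
qed

lemma ratio_indep:
  assumes F: "F \<in> I" "B \<subseteq> X F" and F': "F' \<in> I" "B' \<subseteq> X F'" and e: "cyl F B = cyl F' B'"
  shows "real (card B) / real (card (X F)) = real (card B') / real (card (X F'))"
proof -
  define F'' where "F'' = F \<union> F'"
  have FI: "F'' \<in> I" unfolding F''_def using Un_I F F' by simp
  have s1: "F \<subseteq> F''" "F' \<subseteq> F''" unfolding F''_def by auto
  define S1 where "S1 = {q \<in> X F''. pj G (K F) q \<in> B}"
  define S2 where "S2 = {q \<in> X F''. pj G (K F') q \<in> B'}"
  have "cyl F'' S1 = cyl F B" unfolding S1_def by (rule cyl_refine[OF F(1) FI s1(1), symmetric])
  also have "\<dots> = cyl F' B'" by (rule e)
  also have "\<dots> = cyl F'' S2" unfolding S2_def by (rule cyl_refine[OF F'(1) FI s1(2)])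
  finally have "cyl F'' S1 = cyl F'' S2" .
  then have S: "S1 = S2" by (rule cyl_inj[OF FI, rotated 2]) (auto simp: S1_def S2_def)
  have "real (card B) / real (card (X F)) = real (card S1) / real (card (X F''))"
    unfolding S1_def by (rule ratio_refine[OF F(1) FI s1(1) F(2), symmetric])
  also have "\<dots> = real (card S2) / real (card (X F''))" using S by simp
  also have "\<dots> = real (card B') / real (card (X F'))"
    unfolding S2_def by (rule ratio_refine[OF F'(1) FI s1(2) F'(2)])
  finally show ?thesis .
qed

definition cF where "cF C = (SOME F. F \<in> I \<and> (\<exists>B. B \<subseteq> X F \<and> C = cyl F B))"

definition mu0 :: "('a set \<Rightarrow> 'a set) set \<Rightarrow> ennreal" where
  "mu0 C = ennreal (real (card ((\<lambda>x. x (cF C)) ` C)) / real (card (X (cF C))))"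

lemma mu0_cyl: assumes F: "F \<in> I" and B: "B \<subseteq> X F"
  shows "mu0 (cyl F B) = ennreal (real (card B) / real (card (X F)))"
proof -
  define C where "C = cyl F B"
  have ex: "\<exists>F0. F0 \<in> I \<and> (\<exists>B0. B0 \<subseteq> X F0 \<and> C = cyl F0 B0)" using F B unfolding C_def by blast
  define F0 where "F0 = cF C"
  have "F0 \<in> I \<and> (\<exists>B0. B0 \<subseteq> X F0 \<and> C = cyl F0 B0)"
    unfolding F0_def cF_def by (rule someI_ex[OF ex])
  then obtain B0 where F0: "F0 \<in> I" "B0 \<subseteq> X F0" "C = cyl F0 B0"
    by blast
  have pr: "(\<lambda>x. x F0) ` C = B0" using proj_cyl[OF F0(1,2)] F0(3) by simp
  have "mu0 C = ennreal (real (card B0) / real (card (X F0)))"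
    unfolding mu0_def F0_def[symmetric] pr by simp
  also have "\<dots> = ennreal (real (card B) / real (card (X F)))"
    using ratio_indep[OF F B F0(1,2)] F0(3) unfolding C_def by simp
  finally show ?thesis unfolding C_def .
qed

lemma mu0_empty: "mu0 {} = 0"
proof -
  have "{} = cyl {} {}" unfolding cyl_def by simp
  then show ?thesis using mu0_cyl[OF empty_I, of "{}"] by simp
qed

lemma mu0_additive: "additive Cyl mu0"
  unfolding additive_def
proof (intro ballI impI)
  fix a b assume ab: "a \<in> Cyl" "b \<in> Cyl" "a \<inter> b = {}"
  then obtain F B1 B2 where F: "F \<in> I" "B1 \<subseteq> X F" "B2 \<subseteq> X F" "a = cyl F B1" "b = cyl F B2"
    using Cyl_common by blast
  have "cyl F (B1 \<inter> B2) = cyl F {}" using ab(3) F cyl_Int2 unfolding cyl_def by simp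
  then have d: "B1 \<inter> B2 = {}" using cyl_inj[OF F(1), of "B1 \<inter> B2" "{}"] F by blast
  have fin: "finite B1" "finite B2" using F X_fin finite_subset by blast+
  have "mu0 (a \<union> b) = ennreal (real (card (B1 \<union> B2)) / real (card (X F)))"
    using F cyl_Un mu0_cyl[OF F(1), of "B1 \<union> B2"] by simp
  also have "real (card (B1 \<union> B2)) = real (card B1) + real (card B2)"
    using card_Un_disjoint[OF fin d] by simp
  also have "ennreal ((real (card B1) + real (card B2)) / real (card (X F))) =
      ennreal (real (card B1) / real (card (X F))) + ennreal (real (card B2) / real (card (X F)))"
    by (simp add: add_divide_distrib ennreal_plus)
  finally show "mu0 (a \<union> b) = mu0 a + mu0 b" using F mu0_cyl by simp
qed

lemma cyl_decseq_empty:
  assumes A: "range A \<subseteq> Cyl" and dec: "decseq A" and e: "(\<Inter>i. A i) = {}"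
  shows "\<exists>N. A N = {}"
proof (rule ccontr)
  assume ne: "\<not> (\<exists>N. A N = {})"
  have fip: "(\<forall>C\<in>range A. closedin T C) \<and> (\<forall>\<F>. finite \<F> \<and> \<F> \<subseteq> range A \<longrightarrow> \<Inter>\<F> \<noteq> {}) \<longrightarrow> \<Inter>(range A) \<noteq> {}"
    using compactT[unfolded compact_space_fip] by (rule spec)
  have "\<Inter>(range A) \<noteq> {}"
  proof (rule mp[OF fip], rule conjI)
    show "\<forall>C\<in>range A. closedin T C" using A Cyl_closed by blast
    show "\<forall>\<F>. finite \<F> \<and> \<F> \<subseteq> range A \<longrightarrow> \<Inter>\<F> \<noteq> {}"
    proof (intro allI impI)
      fix \<F> assume h: "finite \<F> \<and> \<F> \<subseteq> range A"
      then obtain J where J: "finite J" "\<F> = A ` J" using finite_subset_image[of \<F> A UNIV] by blast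
      define N where "N = Max (insert 0 J)"
      have "\<And>j. j \<in> J \<Longrightarrow> A N \<subseteq> A j"
      proof -
        fix j assume "j \<in> J"
        then have "j \<le> N" unfolding N_def using J(1) by simp
        then show "A N \<subseteq> A j" using dec by (simp add: decseq_def)
      qed
      then have "A N \<subseteq> \<Inter>\<F>" using J(2) by blast
      moreover have "A N \<noteq> {}" using ne by blast
      ultimately show "\<Inter>\<F> \<noteq> {}" by blast
    qed
  qed
  then show False using e by simp
qed

lemma mu0_cont:
  assumes A: "range A \<subseteq> Cyl" and dec: "decseq A" and e: "(\<Inter>i. A i) = {}"
  shows "(\<lambda>i. mu0 (A i)) \<longlonglongrightarrow> 0"
proof -
  obtain N where N: "A N = {}" using cyl_decseq_empty[OF A dec e] by blast
  have "\<forall>n\<ge>N. mu0 (A n) = 0"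
  proof (intro allI impI)
    fix n assume "N \<le> n"
    then have "A n \<subseteq> A N" using dec by (simp add: decseq_def)
    then show "mu0 (A n) = 0" using N mu0_empty by simp
  qed
  then have "eventually (\<lambda>n. mu0 (A n) = 0) sequentially" using eventually_sequentially by blast
  then show ?thesis by (rule tendsto_eventually)
qed

lemma mu_exists:
  "\<exists>\<mu>'. (\<forall>s\<in>Cyl. \<mu>' s = mu0 s) \<and> measure_space \<Omega> (sigma_sets \<Omega> Cyl) \<mu>'"
proof (rule ring_of_sets.caratheodory_empty_continuous[OF Cyl_ring])
  show "positive Cyl mu0" unfolding positive_def using mu0_empty .
  show "additive Cyl mu0" by (rule mu0_additive)
  show "\<And>A. A \<in> Cyl \<Longrightarrow> mu0 A \<noteq> \<infinity>" unfolding mu0_def by simp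
  show "\<And>A. range A \<subseteq> Cyl \<Longrightarrow> decseq A \<Longrightarrow> (\<Inter>i. A i) = {} \<Longrightarrow> (\<lambda>i. mu0 (A i)) \<longlonglongrightarrow> 0"
    by (rule mu0_cont)
qed

end

context pf2
begin

lemma uniform_val:
  assumes F: "F \<in> I" and B: "B \<subseteq> X F"
  shows "emeasure (uniform_count_measure (X F)) B = ennreal (real (card B) / real (card (X F)))"
  using emeasure_uniform_count_measure[OF X_fin[OF F] B] by simp

lemma Cyl_sigma: "sigma_algebra \<Omega> (sigma_sets \<Omega> Cyl)"
  using sigma_algebra_sigma_sets[OF Cyl_sub] .

lemma proj_meas:
  assumes sp: "space M = \<Omega>" and st: "sets M = sigma_sets \<Omega> Cyl" and F: "F \<in> I"
  shows "(\<lambda>x. x F) \<in> M \<rightarrow>\<^sub>M count_space (X F)"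
proof (subst measurable_count_space_eq2[OF X_fin[OF F]], intro conjI ballI)
  show "(\<lambda>x. x F) \<in> space M \<rightarrow> X F" using sp Om_X[OF _ F] by auto
  fix a assume a: "a \<in> X F"
  have "(\<lambda>x. x F) -` {a} \<inter> space M = cyl F {a}" unfolding sp cyl_def by auto
  moreover have "cyl F {a} \<in> Cyl" using Cyl_I[OF F] a by simp
  ultimately show "(\<lambda>x. x F) -` {a} \<inter> space M \<in> sets M" unfolding st by auto
qed

lemma exists_marg: "\<exists>\<mu>. has_uniform_marginals G H \<mu>"
proof -
  obtain \<mu>' where mu: "\<forall>s\<in>Cyl. \<mu>' s = mu0 s" "measure_space \<Omega> (sigma_sets \<Omega> Cyl) \<mu>'"
    using mu_exists by blast
  define M where "M = measure_of \<Omega> (sigma_sets \<Omega> Cyl) \<mu>'"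
  have sM: "sets M = sigma_sets \<Omega> Cyl" unfolding M_def
    using sigma_algebra.sets_measure_of_eq[OF Cyl_sigma] by simp
  have spM: "space M = \<Omega>" unfolding M_def
    using sigma_algebra.space_measure_of_eq[OF Cyl_sigma] by simp
  have eM: "\<And>C. C \<in> Cyl \<Longrightarrow> emeasure M C = mu0 C"
  proof -
    fix C assume C: "C \<in> Cyl"
    have "emeasure M C = \<mu>' C" unfolding M_def
      by (rule emeasure_measure_of_sigma) (use mu(2) C in \<open>auto simp: measure_space_def\<close>)
    then show "emeasure M C = mu0 C" using mu(1) C by simp
  qed
  have eMc: "\<And>F B. F \<in> I \<Longrightarrow> B \<subseteq> X F \<Longrightarrow> emeasure M (cyl F B) = ennreal (real (card B) / real (card (X F)))"
    using eM Cyl_I mu0_cyl by simp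
  have "has_uniform_marginals G H M"
    unfolding has_uniform_marginals_def
  proof (intro conjI ballI)
    have "emeasure M (space M) = 1"
      unfolding spM using eMc[OF empty_I order_refl] Omega_cyl X_pos[OF empty_I] by simp
    then show "prob_space M" by (rule prob_spaceI)
    show "space M = \<Omega>" by (rule spM)
    show "sets M = sets (borel_of T)" using sM sets_borel by simp
  next
    fix F assume F: "F \<in> I"
    show meas: "(\<lambda>x. x F) \<in> M \<rightarrow>\<^sub>M count_space (X F)" by (rule proj_meas[OF spM sM F])
    show "distr M (count_space (X F)) (\<lambda>x. x F) = uniform_count_measure (X F)"
    proof (rule measure_eqI)
      show "sets (distr M (count_space (X F)) (\<lambda>x. x F)) = sets (uniform_count_measure (X F))"
        by (simp add: sets_uniform_count_measure)
      fix B assume "B \<in> sets (distr M (count_space (X F)) (\<lambda>x. x F))"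
      then have B: "B \<subseteq> X F" by simp
      have "emeasure (distr M (count_space (X F)) (\<lambda>x. x F)) B = emeasure M ((\<lambda>x. x F) -` B \<inter> space M)"
        by (rule emeasure_distr[OF meas]) (use B in simp)
      also have "(\<lambda>x. x F) -` B \<inter> space M = cyl F B" unfolding spM cyl_def by auto
      finally show "emeasure (distr M (count_space (X F)) (\<lambda>x. x F)) B = emeasure (uniform_count_measure (X F)) B"
        using eMc[OF F B] uniform_val[OF F B] by simp
    qed
  qed
  then show ?thesis by blast
qed

lemma marg_facts:
  assumes mu: "has_uniform_marginals G H \<mu>"
  shows "prob_space \<mu>" "space \<mu> = \<Omega>" "sets \<mu> = sigma_sets \<Omega> Cyl"
    "\<And>F B. F \<in> I \<Longrightarrow> B \<subseteq> X F \<Longrightarrow> emeasure \<mu> (cyl F B) = ennreal (real (card B) / real (card (X F)))"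
proof -
  show "prob_space \<mu>" "space \<mu> = \<Omega>" using mu unfolding has_uniform_marginals_def by auto
  show "sets \<mu> = sigma_sets \<Omega> Cyl" using mu sets_borel unfolding has_uniform_marginals_def by auto
  fix F B assume F: "F \<in> I" and B: "B \<subseteq> X F"
  have meas: "(\<lambda>x. x F) \<in> \<mu> \<rightarrow>\<^sub>M count_space (X F)"
    and d: "distr \<mu> (count_space (X F)) (\<lambda>x. x F) = uniform_count_measure (X F)"
    using mu F unfolding has_uniform_marginals_def by auto
  have sp: "space \<mu> = \<Omega>" using mu unfolding has_uniform_marginals_def by auto
  have "emeasure (distr \<mu> (count_space (X F)) (\<lambda>x. x F)) B = emeasure \<mu> ((\<lambda>x. x F) -` B \<inter> space \<mu>)"
    by (rule emeasure_distr[OF meas]) (use B in simp)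
  also have "(\<lambda>x. x F) -` B \<inter> space \<mu> = cyl F B" unfolding sp cyl_def by auto
  finally show "emeasure \<mu> (cyl F B) = ennreal (real (card B) / real (card (X F)))"
    using d uniform_val[OF F B] by simp
qed

lemma lc_bij: assumes g: "g \<in> carrier G" and F: "F \<in> I"
  shows "bij_betw (\<lambda>p. g <# p) (X F) (X F)"
proof (rule bij_betw_imageI)
  show "inj_on (\<lambda>p. g <# p) (X F)"
  proof (rule inj_onI)
    fix p q assume p: "p \<in> X F" and q: "q \<in> X F" and e: "g <# p = g <# q"
    have "p \<subseteq> carrier G" "q \<subseteq> carrier G" using p q X_iff lc_sub_carrier[OF KI[OF F]] by blast+
    then show "p = q" using lc_inj[OF g _ _ e] by blast
  qed
  show "(\<lambda>p. g <# p) ` X F = X F"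
  proof
    show "(\<lambda>p. g <# p) ` X F \<subseteq> X F"
    proof
      fix r assume "r \<in> (\<lambda>p. g <# p) ` X F"
      then obtain p where p: "p \<in> X F" "r = g <# p" by blast
      then obtain a where a: "a \<in> carrier G" "p = a <# K F" using X_iff by blast
      have "r = (g \<otimes> a) <# K F" using p(2) a lc_assoc[OF KI[OF F] g a(1)] by simp
      then show "r \<in> X F" using X_iff g a(1) by auto
    qed
    show "X F \<subseteq> (\<lambda>p. g <# p) ` X F"
    proof
      fix r assume "r \<in> X F"
      then obtain a where a: "a \<in> carrier G" "r = a <# K F" using X_iff by blast
      have ia: "inv g \<otimes> a \<in> carrier G" using g a by simp
      have "g <# ((inv g \<otimes> a) <# K F) = (g \<otimes> (inv g \<otimes> a)) <# K F" using lc_assoc[OF KI[OF F] g ia] .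
      also have "g \<otimes> (inv g \<otimes> a) = a" using g a(1) by (simp add: m_assoc[symmetric])
      finally have "r = g <# ((inv g \<otimes> a) <# K F)" using a by simp
      moreover have "(inv g \<otimes> a) <# K F \<in> X F" using X_iff ia by auto
      ultimately show "r \<in> (\<lambda>p. g <# p) ` X F" by blast
    qed
  qed
qed

lemma act_preimage:
  assumes g: "g \<in> carrier G" and F: "F \<in> I"
  shows "act g -` cyl F B \<inter> \<Omega> = cyl F {p \<in> X F. g <# p \<in> B}"
  unfolding cyl_def using act_in[OF g] act_app[OF F] Om_X[OF _ F] by auto

lemma card_pre:
  assumes g: "g \<in> carrier G" and F: "F \<in> I" and B: "B \<subseteq> X F"
  shows "card {p \<in> X F. g <# p \<in> B} = card B"
proof -
  have bij: "bij_betw (\<lambda>p. g <# p) (X F) (X F)" using lc_bij[OF g F] .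
  have im: "(\<lambda>p. g <# p) ` X F = X F" using bij unfolding bij_betw_def by simp
  have "(\<lambda>p. g <# p) ` {p \<in> X F. g <# p \<in> B} = B"
  proof
    show "(\<lambda>p. g <# p) ` {p \<in> X F. g <# p \<in> B} \<subseteq> B" by blast
    show "B \<subseteq> (\<lambda>p. g <# p) ` {p \<in> X F. g <# p \<in> B}"
    proof
      fix q assume q: "q \<in> B"
      then have "q \<in> (\<lambda>p. g <# p) ` X F" using im B by auto
      then obtain p where "p \<in> X F" "q = g <# p" by blast
      then show "q \<in> (\<lambda>p. g <# p) ` {p \<in> X F. g <# p \<in> B}" using q by blast
    qed
  qed
  moreover have "inj_on (\<lambda>p. g <# p) {p \<in> X F. g <# p \<in> B}"
  proof (rule inj_on_subset)
    show "inj_on (\<lambda>p. g <# p) (X F)" using bij unfolding bij_betw_def by simp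
  qed blast
  ultimately show ?thesis using card_image by metis
qed

lemma act_meas:
  assumes sp: "space M = \<Omega>" and st: "sets M = sigma_sets \<Omega> Cyl" and g: "g \<in> carrier G"
  shows "act g \<in> M \<rightarrow>\<^sub>M M"
proof (rule measurable_sigma_sets[OF st Cyl_sub])
  show "act g \<in> space M \<rightarrow> \<Omega>" using act_in[OF g] sp by auto
  fix C assume "C \<in> Cyl"
  then obtain F B where F: "F \<in> I" "B \<subseteq> X F" "C = cyl F B" using Cyl_E by blast
  have "act g -` C \<inter> space M = cyl F {p \<in> X F. g <# p \<in> B}" using act_preimage[OF g F(1)] F(3) sp by simp
  moreover have "cyl F {p \<in> X F. g <# p \<in> B} \<in> Cyl" using Cyl_I[OF F(1)] by auto
  ultimately show "act g -` C \<inter> space M \<in> sets M" unfolding st by auto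
qed

lemma invariant:
  assumes mu: "has_uniform_marginals G H \<mu>" and g: "g \<in> carrier G"
  shows "distr \<mu> \<mu> (act g) = \<mu>"
proof -
  note mf = marg_facts[OF mu]
  interpret prob_space \<mu> using mf(1) .
  have meas: "act g \<in> \<mu> \<rightarrow>\<^sub>M \<mu>" using act_meas[OF mf(2) mf(3) g] .
  show ?thesis
  proof (rule measure_eqI_generator_eq_countable[OF Cyl_Int_stable Cyl_sub _ _ mf(3), of _ "{\<Omega>}"])
    fix C assume "C \<in> Cyl"
    then obtain F B where F: "F \<in> I" "B \<subseteq> X F" "C = cyl F B" using Cyl_E by blast
    have "emeasure (distr \<mu> \<mu> (act g)) C = emeasure \<mu> (act g -` C \<inter> space \<mu>)"
      by (rule emeasure_distr[OF meas]) (use \<open>C \<in> Cyl\<close> mf(3) in auto)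
    also have "act g -` C \<inter> space \<mu> = cyl F {p \<in> X F. g <# p \<in> B}"
      using act_preimage[OF g F(1)] F(3) mf(2) by simp
    also have "emeasure \<mu> \<dots> = ennreal (real (card B) / real (card (X F)))"
      using mf(4)[OF F(1), of "{p \<in> X F. g <# p \<in> B}"] card_pre[OF g F(1,2)] by auto
    also have "\<dots> = emeasure \<mu> C" using mf(4)[OF F(1,2)] F(3) by simp
    finally show "emeasure (distr \<mu> \<mu> (act g)) C = emeasure \<mu> C" .
  next
    show "sets (distr \<mu> \<mu> (act g)) = sigma_sets \<Omega> Cyl" using mf(3) by simp
  next
    interpret P: prob_space "distr \<mu> \<mu> (act g)" by (rule prob_space_distr[OF meas])
    show "\<And>a. a \<in> {\<Omega>} \<Longrightarrow> emeasure (distr \<mu> \<mu> (act g)) a \<noteq> \<infinity>" by simp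
  qed (use Omega_Cyl in auto)
qed

end

context pf2
begin

lemma meas_cyl:
  assumes mu: "has_uniform_marginals G H \<mu>" and F: "F \<in> I" and B: "B \<subseteq> X F"
  shows "measure \<mu> (cyl F B) = real (card B) / real (card (X F))"
proof -
  note mf = marg_facts[OF mu]
  interpret prob_space \<mu> using mf(1) .
  have "ennreal (measure \<mu> (cyl F B)) = ennreal (real (card B) / real (card (X F)))"
    using mf(4)[OF F B] emeasure_eq_measure by simp
  then show ?thesis by (subst (asm) ennreal_inj) auto
qed

lemma ergodic:
  assumes mu: "has_uniform_marginals G H \<mu>" and A: "A \<in> sets \<mu>"
    and inv: "\<forall>g\<in>carrier G. act g ` A = A"
  shows "measure \<mu> A = 0 \<or> measure \<mu> A = 1"
proof -
  note mf = marg_facts[OF mu]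
  interpret prob_space \<mu> using mf(1) .
  have AO: "A \<subseteq> \<Omega>" using sets.sets_into_space[OF A] mf(2) by simp
  have Cs: "\<And>C. C \<in> Cyl \<Longrightarrow> C \<in> sets \<mu>" using mf(3) by auto
  have pre: "\<And>g. g \<in> carrier G \<Longrightarrow> act g -` A \<inter> \<Omega> = A"
  proof -
    fix g assume g: "g \<in> carrier G"
    show "act g -` A \<inter> \<Omega> = A"
    proof
      show "act g -` A \<inter> \<Omega> \<subseteq> A"
      proof
        fix x assume x: "x \<in> act g -` A \<inter> \<Omega>"
        then have "act g x \<in> act g ` A" using inv g by auto
        then obtain y where y: "y \<in> A" "act g x = act g y" by blast
        have "act (inv g) (act g x) = act (inv g) (act g y)" using y(2) by simp
        then have "x = y" using act_inv(1)[OF g] x y(1) AO by auto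
        then show "x \<in> A" using y by simp
      qed
      show "A \<subseteq> act g -` A \<inter> \<Omega>"
      proof
        fix x assume x: "x \<in> A"
        then have "act g x \<in> act g ` A" by blast
        then show "x \<in> act g -` A \<inter> \<Omega>" using inv g x AO by auto
      qed
    qed
  qed
  have step: "\<And>F q. F \<in> I \<Longrightarrow> q \<in> X F \<Longrightarrow> measure \<mu> (A \<inter> cyl F {q}) = measure \<mu> (A \<inter> cyl F {K F})"
  proof -
    fix F q assume F: "F \<in> I" and q: "q \<in> X F"
    obtain a where a: "a \<in> carrier G" "q = a <# K F" using q X_iff by blast
    have ia: "inv a \<in> carrier G" using a by simp
    have KX: "K F \<in> X F" using X_iff[of "K F" F] lc_one[OF KI[OF F]] by blast
    have set_eq: "{p \<in> X F. inv a <# p \<in> {K F}} = {q}"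
    proof
      show "{p \<in> X F. inv a <# p \<in> {K F}} \<subseteq> {q}"
      proof
        fix p assume p: "p \<in> {p \<in> X F. inv a <# p \<in> {K F}}"
        then obtain b where b: "b \<in> carrier G" "p = b <# K F" using X_iff by blast
        have "inv a <# p = K F" using p by simp
        then have "a <# (inv a <# p) = a <# K F" by simp
        moreover have "a <# (inv a <# p) = p"
          using b lc_assoc[OF KI[OF F] ia b(1)] lc_assoc[OF KI[OF F] a(1), of "inv a \<otimes> b"] a(1)
          by (simp add: m_assoc[symmetric])
        ultimately show "p \<in> {q}" using a by simp
      qed
      show "{q} \<subseteq> {p \<in> X F. inv a <# p \<in> {K F}}"
      proof -
        have "inv a <# q = (inv a \<otimes> a) <# K F" using a lc_assoc[OF KI[OF F] ia a(1)] by simp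
        also have "\<dots> = K F" using a(1) lc_one[OF KI[OF F]] by simp
        finally show ?thesis using q by simp
      qed
    qed
    have meas: "act (inv a) \<in> \<mu> \<rightarrow>\<^sub>M \<mu>" using act_meas[OF mf(2) mf(3) ia] .
    have ACs: "A \<inter> cyl F {K F} \<in> sets \<mu>" using A Cs Cyl_I[OF F] KX by auto
    have "act (inv a) -` (A \<inter> cyl F {K F}) \<inter> space \<mu> = (act (inv a) -` A \<inter> \<Omega>) \<inter> (act (inv a) -` cyl F {K F} \<inter> \<Omega>)"
      using mf(2) by blast
    also have "\<dots> = A \<inter> cyl F {q}" using pre[OF ia] act_preimage[OF ia F] set_eq by simp
    finally have e: "act (inv a) -` (A \<inter> cyl F {K F}) \<inter> space \<mu> = A \<inter> cyl F {q}" .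
    have "measure \<mu> (A \<inter> cyl F {K F}) = measure (distr \<mu> \<mu> (act (inv a))) (A \<inter> cyl F {K F})"
      using invariant[OF mu ia] by simp
    also have "\<dots> = measure \<mu> (A \<inter> cyl F {q})" using measure_distr[OF meas ACs] e by simp
    finally show "measure \<mu> (A \<inter> cyl F {q}) = measure \<mu> (A \<inter> cyl F {K F})" by simp
  qed
  have sumB: "\<And>F B. F \<in> I \<Longrightarrow> B \<subseteq> X F \<Longrightarrow> measure \<mu> (A \<inter> cyl F B) = real (card B) * measure \<mu> (A \<inter> cyl F {K F})"
  proof -
    fix F B assume F: "F \<in> I" and B: "B \<subseteq> X F"
    have finB: "finite B" using B X_fin[OF F] finite_subset by blast
    have "A \<inter> cyl F B = (\<Union>q\<in>B. A \<inter> cyl F {q})" unfolding cyl_def by blast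
    then have "measure \<mu> (A \<inter> cyl F B) = (\<Sum>q\<in>B. measure \<mu> (A \<inter> cyl F {q}))"
    proof (simp only:)
      show "measure \<mu> (\<Union>q\<in>B. A \<inter> cyl F {q}) = (\<Sum>q\<in>B. measure \<mu> (A \<inter> cyl F {q}))"
      proof (rule measure_finite_Union[OF finB])
        show "(\<lambda>q. A \<inter> cyl F {q}) ` B \<subseteq> sets \<mu>"
          using A Cs Cyl_I[OF F] B by auto
        show "disjoint_family_on (\<lambda>q. A \<inter> cyl F {q}) B"
          unfolding disjoint_family_on_def cyl_def by blast
        show "\<And>i. i \<in> B \<Longrightarrow> emeasure \<mu> (A \<inter> cyl F {i}) \<noteq> \<infinity>" by simp
      qed
    qed
    also have "\<dots> = (\<Sum>q\<in>B. measure \<mu> (A \<inter> cyl F {K F}))"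
      using step[OF F] B by (intro sum.cong) auto
    finally show "measure \<mu> (A \<inter> cyl F B) = real (card B) * measure \<mu> (A \<inter> cyl F {K F})" by simp
  qed
  have prodC: "\<And>C. C \<in> Cyl \<Longrightarrow> measure \<mu> (A \<inter> C) = measure \<mu> A * measure \<mu> C"
  proof -
    fix C assume "C \<in> Cyl"
    then obtain F B where F: "F \<in> I" "B \<subseteq> X F" "C = cyl F B" using Cyl_E by blast
    have "A \<inter> cyl F (X F) = A" using AO Om_X[OF _ F(1)] unfolding cyl_def by blast
    then have mA: "measure \<mu> A = real (card (X F)) * measure \<mu> (A \<inter> cyl F {K F})"
      using sumB[OF F(1) order_refl] by simp
    have "real (card (X F)) > 0" using X_pos[OF F(1)] by simp
    then show "measure \<mu> (A \<inter> C) = measure \<mu> A * measure \<mu> C"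
      using sumB[OF F(1,2)] mA meas_cyl[OF mu F(1,2)] F(3) by (simp add: field_simps)
  qed
  define N1 where "N1 = density \<mu> (indicator A)"
  define N2 where "N2 = density \<mu> (\<lambda>_. ennreal (measure \<mu> A))"
  have mi: "indicator A \<in> borel_measurable \<mu>" using borel_measurable_indicator[OF A] .
  have e1: "\<And>C. C \<in> sets \<mu> \<Longrightarrow> emeasure N1 C = ennreal (measure \<mu> (A \<inter> C))"
  proof -
    fix C assume C: "C \<in> sets \<mu>"
    have "emeasure N1 C = (\<integral>\<^sup>+ x. indicator A x * indicator C x \<partial>\<mu>)"
      unfolding N1_def by (rule emeasure_density[OF mi C])
    also have "\<dots> = (\<integral>\<^sup>+ x. indicator (A \<inter> C) x \<partial>\<mu>)" by (simp add: indicator_inter_arith)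
    also have "\<dots> = emeasure \<mu> (A \<inter> C)" using A C by simp
    finally show "emeasure N1 C = ennreal (measure \<mu> (A \<inter> C))" using emeasure_eq_measure by simp
  qed
  have e2: "\<And>C. C \<in> sets \<mu> \<Longrightarrow> emeasure N2 C = ennreal (measure \<mu> A * measure \<mu> C)"
  proof -
    fix C assume C: "C \<in> sets \<mu>"
    have "emeasure N2 C = (\<integral>\<^sup>+ x. ennreal (measure \<mu> A) * indicator C x \<partial>\<mu>)"
      unfolding N2_def by (rule emeasure_density[OF _ C]) simp
    also have "\<dots> = ennreal (measure \<mu> A) * emeasure \<mu> C" using nn_integral_cmult_indicator[OF C] by simp
    finally show "emeasure N2 C = ennreal (measure \<mu> A * measure \<mu> C)"
      using emeasure_eq_measure by (simp add: ennreal_mult)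
  qed
  have "N1 = N2"
  proof (rule measure_eqI_generator_eq_countable[OF Cyl_Int_stable Cyl_sub _ _ _, of _ _ "{\<Omega>}"])
    fix C assume C: "C \<in> Cyl"
    show "emeasure N1 C = emeasure N2 C" using e1[OF Cs[OF C]] e2[OF Cs[OF C]] prodC[OF C] by simp
  next
    show "sets N1 = sigma_sets \<Omega> Cyl" unfolding N1_def using mf(3) by simp
    show "sets N2 = sigma_sets \<Omega> Cyl" unfolding N2_def using mf(3) by simp
  next
    show "\<And>a. a \<in> {\<Omega>} \<Longrightarrow> emeasure N1 a \<noteq> \<infinity>" using e1 Cs Omega_Cyl by simp
  qed (use Omega_Cyl in auto)
  then have "ennreal (measure \<mu> (A \<inter> A)) = ennreal (measure \<mu> A * measure \<mu> A)"
    using e1[OF A] e2[OF A] by simp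
  then have "measure \<mu> A = measure \<mu> A * measure \<mu> A" by (subst (asm) ennreal_inj) auto
  then show ?thesis by (metis mult_cancel_left1 mult_eq_0_iff)
qed

end

context pf2
begin

lemma ratio_fix:
  fixes \<epsilon> :: "'a \<Rightarrow> real"
  assumes S: "S \<subseteq> carrier G"
    and eps: "\<forall>\<gamma>\<in>carrier G - {\<one>}. 0 < \<epsilon> \<gamma> \<and> \<epsilon> \<gamma> < 1"
    and Hfix: "\<forall>\<gamma>\<in>carrier G - {\<one>}. real (card {q \<in> lcosets (H \<gamma>). \<forall>s\<in>S. s <# q = q})
                    \<ge> (1 - \<epsilon> \<gamma>) * real (card (lcosets (H \<gamma>)))"
    and F: "F \<in> I"
  shows "(\<Prod>\<gamma>\<in>F. 1 - \<epsilon> \<gamma>) \<le> real (card (fixc G S (K F))) / real (card (X F))"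
proof -
  have fF: "finite F" and sF: "F \<subseteq> carrier G - {\<one>}" using F fin_index_iff by auto
  note c = count[OF S cop pow fF sF]
  have cX: "card (X F) = (\<Prod>\<gamma>\<in>F. card (lcosets (H \<gamma>)))" using c unfolding XF_def by blast
  have cfix: "card (fixc G S (K F)) = (\<Prod>\<gamma>\<in>F. card (fixc G S (H \<gamma>)))" using c by blast
  have "real (card (fixc G S (K F))) / real (card (X F)) =
        (\<Prod>\<gamma>\<in>F. real (card (fixc G S (H \<gamma>)))) / (\<Prod>\<gamma>\<in>F. real (card (lcosets (H \<gamma>))))"
    unfolding cX cfix by simp
  also have "\<dots> = (\<Prod>\<gamma>\<in>F. real (card (fixc G S (H \<gamma>))) / real (card (lcosets (H \<gamma>))))"
    by (rule prod_dividef[symmetric])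
  finally have r: "real (card (fixc G S (K F))) / real (card (X F)) =
      (\<Prod>\<gamma>\<in>F. real (card (fixc G S (H \<gamma>))) / real (card (lcosets (H \<gamma>))))" .
  have "(\<Prod>\<gamma>\<in>F. 1 - \<epsilon> \<gamma>) \<le> (\<Prod>\<gamma>\<in>F. real (card (fixc G S (H \<gamma>))) / real (card (lcosets (H \<gamma>))))"
  proof (rule prod_mono)
    fix \<gamma> assume "\<gamma> \<in> F"
    then have g: "\<gamma> \<in> carrier G - {\<one>}" using sF by blast
    have "H \<gamma> \<in> lcosets (H \<gamma>)" using lcosets_iff[of "H \<gamma>" "H \<gamma>"] lc_one[OF H_sub[OF g]] by force
    then have pos: "real (card (lcosets (H \<gamma>))) > 0" using H_fin[OF g] card_gt_0_iff by fastforce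
    have h: "real (card (fixc G S (H \<gamma>))) \<ge> (1 - \<epsilon> \<gamma>) * real (card (lcosets (H \<gamma>)))"
      using Hfix g unfolding fixc_def by blast
    have "1 - \<epsilon> \<gamma> \<le> real (card (fixc G S (H \<gamma>))) / real (card (lcosets (H \<gamma>)))"
      using h pos by (simp add: field_simps)
    moreover have "\<epsilon> \<gamma> < 1" using eps g by blast
    then have "0 \<le> 1 - \<epsilon> \<gamma>" by simp
    ultimately show "0 \<le> 1 - \<epsilon> \<gamma> \<and> 1 - \<epsilon> \<gamma> \<le> real (card (fixc G S (H \<gamma>))) / real (card (lcosets (H \<gamma>)))"
      by blast
  qed
  then show ?thesis using r by simp
qed

lemma finite_in_chain:
  fixes f :: "nat \<Rightarrow> 'a"
  assumes F: "F \<in> I" and rf: "range f = carrier G - {\<one>}"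
  shows "\<exists>k. F \<subseteq> f ` {..<k}"
proof -
  have fF: "finite F" and sF: "F \<subseteq> range f" using F fin_index_iff rf by auto
  obtain J where J: "finite J" "F = f ` J" using finite_subset_image[OF fF sF] by blast
  define k where "k = Suc (Max (insert 0 J))"
  have "J \<subseteq> {..<k}"
  proof
    fix j assume "j \<in> J"
    then have "j \<le> Max (insert 0 J)" using J(1) by simp
    then show "j \<in> {..<k}" unfolding k_def by simp
  qed
  then show ?thesis using J(2) by blast
qed

lemma not_ae:
  fixes \<epsilon> :: "'a \<Rightarrow> real"
  assumes mu: "has_uniform_marginals G H \<mu>"
    and Ssub: "subgroup S G" and Sne: "S \<noteq> {\<one>}"
    and eps: "\<forall>\<gamma>\<in>carrier G - {\<one>}. 0 < \<epsilon> \<gamma> \<and> \<epsilon> \<gamma> < 1"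
    and eps_prod: "(INF F\<in>fin_index G. (\<Prod>\<gamma>\<in>F. 1 - \<epsilon> \<gamma>)) > 0"
    and Hfix: "\<forall>\<gamma>\<in>carrier G - {\<one>}. real (card {q \<in> lcosets (H \<gamma>). \<forall>s\<in>S. s <# q = q})
                    \<ge> (1 - \<epsilon> \<gamma>) * real (card (lcosets (H \<gamma>)))"
  shows "\<not> (AE x in \<mu>. x \<in> free_points G T act)"
proof
  assume ae: "AE x in \<mu>. x \<in> free_points G T act"
  note mf = marg_facts[OF mu]
  interpret prob_space \<mu> using mf(1) .
  have S: "S \<subseteq> carrier G" using Ssub subgroup.subset by blast
  obtain s where s: "s \<in> S" "s \<noteq> \<one>" using Sne subgroup.one_closed[OF Ssub] by blast
  have sc: "s \<in> carrier G" using s S by blast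
  have ne: "carrier G - {\<one>} \<noteq> {}" using s sc by blast
  define f where "f = from_nat_into (carrier G - {\<one>})"
  have cD: "countable (carrier G - {\<one>})" using cntbl by simp
  have rf: "range f = carrier G - {\<one>}" unfolding f_def using range_from_nat_into[OF ne cD] .
  define Fk where "Fk k = f ` {..<k}" for k
  have FkI: "\<And>k. Fk k \<in> I" unfolding Fk_def fin_index_iff using rf by auto
  have Fk_mono: "\<And>k k'. k \<le> k' \<Longrightarrow> Fk k \<subseteq> Fk k'" unfolding Fk_def by auto
  define D where "D k = cyl (Fk k) (fixc G S (K (Fk k)))" for k
  have fixX: "\<And>F. fixc G S (K F) \<subseteq> X F" unfolding fixc_def XF_def by blast
  have DC: "\<And>k. D k \<in> Cyl" unfolding D_def using Cyl_I[OF FkI fixX] by blast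
  have Ds: "\<And>k. D k \<in> sets \<mu>" using DC mf(3) by auto
  define c0 where "c0 = (INF F\<in>fin_index G. (\<Prod>\<gamma>\<in>F. 1 - \<epsilon> \<gamma>))"
  have bdd: "bdd_below ((\<lambda>F. \<Prod>\<gamma>\<in>F. 1 - \<epsilon> \<gamma>) ` I)"
  proof (rule bdd_belowI)
    fix x assume "x \<in> (\<lambda>F. \<Prod>\<gamma>\<in>F. 1 - \<epsilon> \<gamma>) ` I"
    then obtain F where F: "F \<in> I" "x = (\<Prod>\<gamma>\<in>F. 1 - \<epsilon> \<gamma>)" by blast
    have "\<And>\<gamma>. \<gamma> \<in> F \<Longrightarrow> 0 \<le> 1 - \<epsilon> \<gamma>"
    proof -
      fix \<gamma> assume "\<gamma> \<in> F"
      then have "\<gamma> \<in> carrier G - {\<one>}" using F(1) fin_index_iff by blast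
      then have "\<epsilon> \<gamma> < 1" using eps by blast
      then show "0 \<le> 1 - \<epsilon> \<gamma>" by simp
    qed
    then show "0 \<le> x" using F(2) prod_nonneg by metis
  qed
  have mD: "\<And>k. c0 \<le> measure \<mu> (D k)"
  proof -
    fix k
    have "c0 \<le> (\<Prod>\<gamma>\<in>Fk k. 1 - \<epsilon> \<gamma>)" unfolding c0_def by (rule cINF_lower[OF bdd FkI])
    also have "\<dots> \<le> real (card (fixc G S (K (Fk k)))) / real (card (X (Fk k)))"
      by (rule ratio_fix[OF S eps Hfix FkI])
    also have "\<dots> = measure \<mu> (D k)" unfolding D_def using meas_cyl[OF mu FkI fixX] by simp
    finally show "c0 \<le> measure \<mu> (D k)" .
  qed
  have fix_down: "\<And>x F F'. x \<in> \<Omega> \<Longrightarrow> F \<in> I \<Longrightarrow> F' \<in> I \<Longrightarrow> F \<subseteq> F' \<Longrightarrow> x F' \<in> fixc G S (K F') \<Longrightarrow> x F \<in> fixc G S (K F)"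
  proof -
    fix x F F' assume x: "x \<in> \<Omega>" and F: "F \<in> I" "F' \<in> I" "F \<subseteq> F'" and fx: "x F' \<in> fixc G S (K F')"
    obtain a where a: "a \<in> carrier G" "x F' = a <# K F'" using Om_rep[OF x F(2)] by blast
    have "\<forall>s\<in>S. inv a \<otimes> s \<otimes> a \<in> K F'" using fx a fix_lc_iff[OF KI[OF F(2)] S a(1)] by simp
    then have "\<forall>s\<in>S. inv a \<otimes> s \<otimes> a \<in> K F" using K_anti[OF F(3)] by blast
    then have "a <# K F \<in> fixc G S (K F)" using fix_lc_iff[OF KI[OF F(1)] S a(1)] by simp
    then show "x F \<in> fixc G S (K F)" using Om_compat[OF x F a] by simp
  qed
  have dec: "decseq D"
  proof (rule decseq_SucI)
    fix k show "D (Suc k) \<subseteq> D k"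
    proof
      fix x assume "x \<in> D (Suc k)"
      then have x: "x \<in> \<Omega>" "x (Fk (Suc k)) \<in> fixc G S (K (Fk (Suc k)))" unfolding D_def cyl_def by auto
      have "x (Fk k) \<in> fixc G S (K (Fk k))" using fix_down[OF x(1) FkI FkI Fk_mono x(2)] by simp
      then show "x \<in> D k" unfolding D_def cyl_def using x(1) by simp
    qed
  qed
  have Dfix: "(\<Inter>k. D k) \<subseteq> {x \<in> space \<mu>. \<not> x \<in> free_points G T act}"
  proof
    fix x assume x: "x \<in> (\<Inter>k. D k)"
    then have xO: "x \<in> \<Omega>" unfolding D_def cyl_def by blast
    have "act s x = x"
    proof
      fix F show "act s x F = x F"
      proof (cases "F \<in> I")
        case True
        obtain k where k: "F \<subseteq> Fk k" using finite_in_chain[OF True rf] unfolding Fk_def by blast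
        have "x (Fk k) \<in> fixc G S (K (Fk k))" using x unfolding D_def cyl_def by blast
        then have "x F \<in> fixc G S (K F)" using fix_down[OF xO True FkI k] by simp
        then show ?thesis using act_app[OF True] s(1) unfolding fixc_def by simp
      next
        case False then show ?thesis using Om_ext[OF xO False] unfolding inv_lim_act_def by simp
      qed
    qed
    then have "x \<notin> free_points G T act" unfolding free_points_def using sc s(2) by blast
    then show "x \<in> {x \<in> space \<mu>. \<not> x \<in> free_points G T act}" using xO mf(2) by simp
  qed
  obtain N where N: "{x \<in> space \<mu>. \<not> x \<in> free_points G T act} \<subseteq> N" "emeasure \<mu> N = 0" "N \<in> sets \<mu>"
    using ae by (rule AE_E)
  have "measure \<mu> (\<Inter>k. D k) \<le> measure \<mu> N" using finite_measure_mono[OF _ N(3)] Dfix N(1) by blast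
  also have "measure \<mu> N = 0" using N(2) by (simp add: measure_def)
  finally have le0: "measure \<mu> (\<Inter>k. D k) \<le> 0" .
  have lim: "(\<lambda>k. measure \<mu> (D k)) \<longlonglongrightarrow> measure \<mu> (\<Inter>k. D k)"
    using finite_Lim_measure_decseq[OF _ dec] Ds by blast
  have "c0 \<le> measure \<mu> (\<Inter>k. D k)"
    by (rule LIMSEQ_le_const[OF lim]) (use mD in blast)
  then show False using le0 eps_prod unfolding c0_def by simp
qed

end

theorem theorem3p2:
  fixes G :: "('a, 'c) monoid_scheme" (structure)
    and S :: "'a set"
    and \<epsilon> :: "'a \<Rightarrow> real"
    and n :: "'a \<Rightarrow> int"
    and H :: "'a \<Rightarrow> 'a set"
  assumes grp: "group G"
    and cntbl: "countable (carrier G)"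
    and S_sub: "subgroup S G"
    and S_nontriv: "S \<noteq> {\<one>}"
    and eps_range: "\<forall>\<gamma>\<in>carrier G - {\<one>}. 0 < \<epsilon> \<gamma> \<and> \<epsilon> \<gamma> < 1"
    and eps_prod: "(INF F\<in>fin_index G. (\<Prod>\<gamma>\<in>F. 1 - \<epsilon> \<gamma>)) > 0"
    and n_coprime: "\<forall>\<gamma>\<in>carrier G - {\<one>}. \<forall>\<delta>\<in>carrier G - {\<one>}.
                      \<gamma> \<noteq> \<delta> \<longrightarrow> coprime (n \<gamma>) (n \<delta>)"
    and H_sub: "\<forall>\<gamma>\<in>carrier G - {\<one>}. subgroup (H \<gamma>) G"
    and H_fin: "\<forall>\<gamma>\<in>carrier G - {\<one>}. finite (lcosets (H \<gamma>))"
    and H_pow: "\<forall>\<gamma>\<in>carrier G - {\<one>}. \<exists>k::nat. int (card (lcosets (H \<gamma>))) = n \<gamma> ^ k"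
    and H_notin: "\<forall>\<gamma>\<in>carrier G - {\<one>}. \<gamma> \<notin> H \<gamma>"
    and H_fix: "\<forall>\<gamma>\<in>carrier G - {\<one>}.
                  real (card {q \<in> lcosets (H \<gamma>). \<forall>s\<in>S. s <# q = q})
                    \<ge> (1 - \<epsilon> \<gamma>) * real (card (lcosets (H \<gamma>)))"
  shows "(\<exists>\<mu>. has_uniform_marginals G H \<mu>) \<and>
         (\<forall>\<mu>. has_uniform_marginals G H \<mu> \<longrightarrow>
            allosteric G (inv_lim_top G H) (inv_lim_act G) \<mu>)"
proof -
  have "pf2 G H n"
    unfolding pf2_def pf2_axioms_def pf_def pf_axioms_def
    using grp H_sub H_fin H_notin n_coprime H_pow cntbl by blast
  then interpret P: pf2 G H n .
  have ne: "carrier G - {\<one>} \<noteq> {}"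
  proof -
    obtain s where s: "s \<in> S" "s \<noteq> \<one>" using S_nontriv subgroup.one_closed[OF S_sub] by blast
    then have "s \<in> carrier G" using subgroup.subset[OF S_sub] by blast
    then show ?thesis using s by blast
  qed
  show ?thesis
  proof (intro conjI allI impI)
    show "\<exists>\<mu>. has_uniform_marginals G H \<mu>" by (rule P.exists_marg)
  next
    fix \<mu> assume mu: "has_uniform_marginals G H \<mu>"
    note mf = P.marg_facts[OF mu]
    have eim: "ergodic_invariant_measure G (inv_lim_top G H) (inv_lim_act G) \<mu>"
      unfolding ergodic_invariant_measure_def
    proof (intro conjI ballI impI)
      show "prob_space \<mu>" by (rule mf(1))
      show "space \<mu> = topspace (inv_lim_top G H)" using mf(2) P.topT by simp
      show "sets \<mu> = sets (borel_of (inv_lim_top G H))" using mf(3) P.sets_borel by simp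
    next
      fix g assume g: "g \<in> carrier G"
      show "inv_lim_act G g \<in> \<mu> \<rightarrow>\<^sub>M \<mu>" by (rule P.act_meas[OF mf(2) mf(3) g])
      show "distr \<mu> \<mu> (inv_lim_act G g) = \<mu>" by (rule P.invariant[OF mu g])
    next
      fix A assume "A \<in> sets \<mu>" "\<forall>g\<in>carrier G. inv_lim_act G g ` A = A"
      then show "measure \<mu> A = 0 \<or> measure \<mu> A = 1" using P.ergodic[OF mu] by blast
    qed
    show "allosteric G (inv_lim_top G H) (inv_lim_act G) \<mu>"
      unfolding allosteric_def
      using P.compactT P.metrizableT P.top_act P.minimalT eim P.comeagerT[OF ne]
        P.not_ae[OF mu S_sub S_nontriv eps_range eps_prod H_fix]
      by blast
  qed
qed

end
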